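(* For every real $\theta\geq 0$, $K_0(A(\mathbb{R}^2_\theta))=K_0(\mathbb{C})\cong\mathbb{Z}$.
   Context: $A(\mathbb{R}^2_\theta)$ is the unital $*$-algebra generated by two self-adjoint elements $x,y$ with $[x,y]=xy-yx=-i\theta$, elements being finite sums $\sum a_{p,q}x^py^q$ with linearly independent ordered monomials. A projector over a $*$-algebra $A$ is a square matrix $p$ over $A$ with $p^2=p=p^*$; projectors $p,q$ are equivalent if $\mathrm{diag}(p,0)=u\,\mathrm{diag}(q,0)\,u^*$ for some unitary matrix $u$ over $A$ of suitable size; $K_0(A)$ is the Grothendieck group of the semigroup of equivalence classes under $p+q:=\mathrm{diag}(p,q)$. *)

theory Defs
  imports Complex_Main "HOL-Algebra.Elementary_Groups"
begin

record 'a salg =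
  sa_carrier :: "'a set"
  sa_zero :: 'a
  sa_one :: 'a
  sa_add :: "'a \<Rightarrow> 'a \<Rightarrow> 'a"
  sa_mul :: "'a \<Rightarrow> 'a \<Rightarrow> 'a"
  sa_star :: "'a \<Rightarrow> 'a"

definition complex_salg :: "complex salg" where
  "complex_salg = \<lparr>sa_carrier = UNIV, sa_zero = 0, sa_one = 1, sa_add = (+),
     sa_mul = (*), sa_star = cnj\<rparr>"

text \<open>The algebra A(R^2_theta): an element \<open>f\<close> stands for the finite sum
  \<open>\<Sum> f(p,q) x^p y^q\<close> over ordered monomials.  Products and adjoints are
  reordered using \<open>y x = x y + i theta\<close> (i.e. \<open>[x,y] = -i theta\<close>):
  \<open>y^q x^r = \<Sum>_k C(q,k) C(r,k) k! (i theta)^k x^(r-k) y^(q-k)\<close>.\<close>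

definition supp2 :: "(nat \<times> nat \<Rightarrow> complex) \<Rightarrow> (nat \<times> nat) set" where
  "supp2 f = {m. f m \<noteq> 0}"

definition moyal_mul :: "real \<Rightarrow> (nat \<times> nat \<Rightarrow> complex) \<Rightarrow> (nat \<times> nat \<Rightarrow> complex) \<Rightarrow> (nat \<times> nat \<Rightarrow> complex)" where
  "moyal_mul \<theta> f g = (\<lambda>(a, b).
     \<Sum>(p, q)\<in>supp2 f. \<Sum>(r, s)\<in>supp2 g. \<Sum>k\<in>{..min q r}.
       (if p + r - k = a \<and> q + s - k = b
        then f (p, q) * g (r, s) * of_nat (q choose k) * of_nat (r choose k) * of_nat (fact k)
             * (\<i> * of_real \<theta>) ^ k
        else 0))"

definition moyal_star :: "real \<Rightarrow> (nat \<times> nat \<Rightarrow> complex) \<Rightarrow> (nat \<times> nat \<Rightarrow> complex)" where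
  "moyal_star \<theta> f = (\<lambda>(a, b).
     \<Sum>(p, q)\<in>supp2 f. \<Sum>k\<in>{..min p q}.
       (if p - k = a \<and> q - k = b
        then cnj (f (p, q)) * of_nat (q choose k) * of_nat (p choose k) * of_nat (fact k)
             * (\<i> * of_real \<theta>) ^ k
        else 0))"

definition A_theta :: "real \<Rightarrow> (nat \<times> nat \<Rightarrow> complex) salg" where
  "A_theta \<theta> = \<lparr>sa_carrier = {f. finite (supp2 f)},
     sa_zero = (\<lambda>_. 0),
     sa_one = (\<lambda>m. if m = (0, 0) then 1 else 0),
     sa_add = (\<lambda>f g m. f m + g m),
     sa_mul = moyal_mul \<theta>,
     sa_star = moyal_star \<theta>\<rparr>"

definition scalar_incl :: "complex \<Rightarrow> (nat \<times> nat \<Rightarrow> complex)" where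
  "scalar_incl c = (\<lambda>m. if m = (0, 0) then c else 0)"

text \<open>A matrix of size \<open>n\<close> is a function \<open>nat \<Rightarrow> nat \<Rightarrow> 'a\<close> with entries in the
  carrier in the range \<open>i, j < n\<close> and zero elsewhere.  Thus padding by zeros
  (\<open>diag(p,0)\<close>) does not change the representing function.\<close>

type_synonym 'a mat = "nat \<Rightarrow> nat \<Rightarrow> 'a"

definition mat_in :: "'a salg \<Rightarrow> nat \<Rightarrow> 'a mat \<Rightarrow> bool" where
  "mat_in A n M \<longleftrightarrow> (\<forall>i j. i < n \<and> j < n \<longrightarrow> M i j \<in> sa_carrier A)
     \<and> (\<forall>i j. \<not> (i < n \<and> j < n) \<longrightarrow> M i j = sa_zero A)"

definition asum :: "'a salg \<Rightarrow> 'a list \<Rightarrow> 'a" where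
  "asum A xs = foldr (sa_add A) xs (sa_zero A)"

definition mmul :: "'a salg \<Rightarrow> nat \<Rightarrow> 'a mat \<Rightarrow> 'a mat \<Rightarrow> 'a mat" where
  "mmul A n M N = (\<lambda>i j. if i < n \<and> j < n
      then asum A (map (\<lambda>k. sa_mul A (M i k) (N k j)) [0..<n]) else sa_zero A)"

definition mstar :: "'a salg \<Rightarrow> nat \<Rightarrow> 'a mat \<Rightarrow> 'a mat" where
  "mstar A n M = (\<lambda>i j. if i < n \<and> j < n then sa_star A (M j i) else sa_zero A)"

definition mid :: "'a salg \<Rightarrow> nat \<Rightarrow> 'a mat" where
  "mid A n = (\<lambda>i j. if i = j \<and> i < n then sa_one A else sa_zero A)"

definition unitary :: "'a salg \<Rightarrow> nat \<Rightarrow> 'a mat \<Rightarrow> bool" where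
  "unitary A n u \<longleftrightarrow> mat_in A n u \<and> mmul A n u (mstar A n u) = mid A n
     \<and> mmul A n (mstar A n u) u = mid A n"

definition projector :: "'a salg \<Rightarrow> nat \<times> 'a mat \<Rightarrow> bool" where
  "projector A P \<longleftrightarrow> (case P of (n, p) \<Rightarrow>
     mat_in A n p \<and> mmul A n p p = p \<and> mstar A n p = p)"

text \<open>\<open>p \<sim> q\<close> iff \<open>diag(p,0) = u diag(q,0) u*\<close> for a unitary \<open>u\<close> of a suitable size.\<close>
definition proj_equiv :: "'a salg \<Rightarrow> nat \<times> 'a mat \<Rightarrow> nat \<times> 'a mat \<Rightarrow> bool" where
  "proj_equiv A P Q \<longleftrightarrow> projector A P \<and> projector A Q \<and>
     (\<exists>N u. fst P \<le> N \<and> fst Q \<le> N \<and> unitary A N u \<and>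
        snd P = mmul A N (mmul A N u (snd Q)) (mstar A N u))"

definition dsum :: "'a salg \<Rightarrow> nat \<times> 'a mat \<Rightarrow> nat \<times> 'a mat \<Rightarrow> nat \<times> 'a mat" where
  "dsum A P Q = (case P of (n, p) \<Rightarrow> case Q of (m, q) \<Rightarrow>
     (n + m, \<lambda>i j. if i < n \<and> j < n then p i j
                   else if n \<le> i \<and> n \<le> j \<and> i < n + m \<and> j < n + m then q (i - n) (j - n)
                   else sa_zero A))"

definition zero_proj :: "'a salg \<Rightarrow> nat \<times> 'a mat" where
  "zero_proj A = (0, \<lambda>i j. sa_zero A)"

text \<open>Formal differences \<open>[a] - [b]\<close>: \<open>(a,b) ~ (c,d)\<close> iff
  \<open>[a]+[d]+[e] = [c]+[b]+[e]\<close> in the semigroup of classes, for some \<open>e\<close>.\<close>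
definition grel :: "'a salg \<Rightarrow> ((nat \<times> 'a mat) \<times> (nat \<times> 'a mat)) rel" where
  "grel A = {((a, b), (c, d)). projector A a \<and> projector A b \<and> projector A c \<and> projector A d \<and>
     (\<exists>e. projector A e \<and> proj_equiv A (dsum A (dsum A a d) e) (dsum A (dsum A c b) e))}"

definition K0 :: "'a salg \<Rightarrow> ((nat \<times> 'a mat) \<times> (nat \<times> 'a mat)) set monoid" where
  "K0 A = \<lparr>carrier = {grel A `` {(a, b)} | a b. projector A a \<and> projector A b},
     monoid.mult = (\<lambda>X Y. \<Union>x\<in>X. \<Union>y\<in>Y.
        grel A `` {(dsum A (fst x) (fst y), dsum A (snd x) (snd y))}),
     one = grel A `` {(zero_proj A, zero_proj A)}\<rparr>"

definition K0_map :: "'b salg \<Rightarrow> ('a \<Rightarrow> 'b)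
    \<Rightarrow> ((nat \<times> 'a mat) \<times> (nat \<times> 'a mat)) set \<Rightarrow> ((nat \<times> 'b mat) \<times> (nat \<times> 'b mat)) set" where
  "K0_map B \<phi> X = (\<Union>x\<in>X. grel B ``
     {((fst (fst x), \<lambda>i j. \<phi> (snd (fst x) i j)), (fst (snd x), \<lambda>i j. \<phi> (snd (snd x) i j)))})"

end

theory Submission
  imports Defs
begin


definition cm :: "nat \<Rightarrow> complex mat \<Rightarrow> complex mat \<Rightarrow> complex mat" where
  "cm n A B = (\<lambda>i j. if i < n \<and> j < n then (\<Sum>k<n. A i k * B k j) else 0)"
definition cst :: "nat \<Rightarrow> complex mat \<Rightarrow> complex mat" where
  "cst n A = (\<lambda>i j. if i < n \<and> j < n then cnj (A j i) else 0)"
definition cid :: "nat \<Rightarrow> complex mat" where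
  "cid n = (\<lambda>i j. if i = j \<and> i < n then 1 else 0)"
definition zo :: "nat \<Rightarrow> complex mat \<Rightarrow> bool" where
  "zo n A \<longleftrightarrow> (\<forall>i j. \<not> (i < n \<and> j < n) \<longrightarrow> A i j = 0)"
definition tr :: "nat \<Rightarrow> complex mat \<Rightarrow> complex" where
  "tr n A = (\<Sum>i<n. A i i)"
definition cun :: "nat \<Rightarrow> complex mat \<Rightarrow> bool" where
  "cun n U \<longleftrightarrow> zo n U \<and> cm n U (cst n U) = cid n \<and> cm n (cst n U) U = cid n"
definition cproj :: "nat \<Rightarrow> complex mat \<Rightarrow> bool" where
  "cproj n p \<longleftrightarrow> zo n p \<and> cm n p p = p \<and> cst n p = p"

lemma asum_C: "asum complex_salg xs = sum_list xs"
  by (induction xs) (auto simp: asum_def complex_salg_def)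

lemma mmul_C: "mmul complex_salg n A B = cm n A B"
  unfolding mmul_def asum_C
  by (auto simp: cm_def complex_salg_def interv_sum_list_conv_sum_set_nat
      atLeast0LessThan intro!: ext)

lemma mstar_C: "mstar complex_salg n A = cst n A"
  by (auto simp: mstar_def cst_def complex_salg_def intro!: ext)

lemma mid_C: "mid complex_salg n = cid n"
  by (auto simp: mid_def cid_def complex_salg_def intro!: ext)

lemma mat_in_C: "mat_in complex_salg n A = zo n A"
  by (auto simp: mat_in_def zo_def complex_salg_def)

lemma unitary_C: "unitary complex_salg n U = cun n U"
  by (simp add: unitary_def cun_def mat_in_C mmul_C mstar_C mid_C)

lemma projector_C: "projector complex_salg (n, p) = cproj n p"
  by (simp add: projector_def cproj_def mat_in_C mmul_C mstar_C)

lemma zo_cm[simp]: "zo n (cm n A B)" by (simp add: zo_def cm_def)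
lemma zo_cst[simp]: "zo n (cst n A)" by (simp add: zo_def cst_def)
lemma zo_cid[simp]: "zo n (cid n)" by (simp add: zo_def cid_def)

lemma cm_assoc: "cm n (cm n A B) C = cm n A (cm n B C)"
proof (rule ext, rule ext)
  fix i j
  show "cm n (cm n A B) C i j = cm n A (cm n B C) i j"
    unfolding cm_def
    by (auto simp: sum_distrib_left sum_distrib_right mult.assoc intro: sum.swap)
qed

lemma cst_cm: "cst n (cm n A B) = cm n (cst n B) (cst n A)"
  unfolding cst_def cm_def
  by (auto intro!: ext simp: mult.commute)

lemma cst_cst: "zo n A \<Longrightarrow> cst n (cst n A) = A"
  unfolding cst_def zo_def by (auto intro!: ext)

lemma cm_cid_left: assumes "zo n A" shows "cm n (cid n) A = A"
proof (rule ext, rule ext)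
  fix i j
  have "(\<Sum>k<n. cid n i k * A k j) = (\<Sum>k<n. if k = i then (if i < n then A i j else 0) else 0)"
    by (rule sum.cong) (auto simp: cid_def)
  then show "cm n (cid n) A i j = A i j" using assms by (auto simp: cm_def zo_def)
qed

lemma cm_cid_right: assumes "zo n A" shows "cm n A (cid n) = A"
proof (rule ext, rule ext)
  fix i j
  have "(\<Sum>k<n. A i k * cid n k j) = (\<Sum>k<n. if k = j then (if j < n then A i j else 0) else 0)"
    by (rule sum.cong) (auto simp: cid_def)
  then show "cm n A (cid n) i j = A i j" using assms by (auto simp: cm_def zo_def)
qed

lemma cst_cid[simp]: "cst n (cid n) = cid n"
  unfolding cst_def cid_def by (auto intro!: ext)

lemma cm_zero_left[simp]: "cm n (\<lambda>i j. 0) A = (\<lambda>i j. 0)"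
  by (rule ext, rule ext) (simp add: cm_def)
lemma cm_zero_right[simp]: "cm n A (\<lambda>i j. 0) = (\<lambda>i j. 0)"
  by (rule ext, rule ext) (simp add: cm_def)

lemma tr_cm: "tr n (cm n A B) = tr n (cm n B A)"
  unfolding tr_def cm_def
  by (simp add: mult.commute, rule sum.swap)

lemma cun_cid: "cun n (cid n)"
  by (simp add: cun_def cm_cid_left)

lemma cun_cst: "cun n U \<Longrightarrow> cun n (cst n U)"
  by (simp add: cun_def cst_cst)

lemma cun_mult: assumes "cun n U" "cun n V" shows "cun n (cm n U V)"
proof -
  have "cm n (cm n U V) (cst n (cm n U V)) = cm n U (cm n (cm n V (cst n V)) (cst n U))"
    by (simp add: cst_cm cm_assoc)
  also have "\<dots> = cid n" using assms by (simp add: cun_def cm_cid_left)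
  finally have 1: "cm n (cm n U V) (cst n (cm n U V)) = cid n" .
  have "cm n (cst n (cm n U V)) (cm n U V) = cm n (cst n V) (cm n (cm n (cst n U) U) V)"
    by (simp add: cst_cm cm_assoc)
  also have "\<dots> = cid n" using assms by (simp add: cun_def cm_cid_left)
  finally show ?thesis using 1 by (simp add: cun_def)
qed

lemma tr_conj: assumes "cun n U" shows "tr n (cm n (cm n U p) (cst n U)) = tr n (cm n p (cid n))"
proof -
  have "tr n (cm n (cm n U p) (cst n U)) = tr n (cm n (cst n U) (cm n U p))" by (rule tr_cm)
  also have "\<dots> = tr n (cm n (cm n (cst n U) U) p)" by (simp add: cm_assoc)
  also have "\<dots> = tr n (cm n p (cm n (cst n U) U))" by (rule tr_cm)
  finally show ?thesis using assms by (simp add: cun_def)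
qed


lemma sum_delta_left: "(\<Sum>k<(n::nat). (if i = k then 1 else 0) * (X k :: complex)) = (if i < n then X i else 0)"
proof -
  have "(\<Sum>k<n. (if i = k then 1 else 0) * X k) = (\<Sum>k<n. if k = i then X i else 0)"
    by (rule sum.cong) auto
  also have "\<dots> = (if i < n then X i else 0)" by (subst sum.delta) auto
  finally show ?thesis .
qed

lemma sum_delta_right: "(\<Sum>k<(n::nat). (X k :: complex) * (if k = j then 1 else 0)) = (if j < n then X j else 0)"
proof -
  have "(\<Sum>k<n. X k * (if k = j then 1 else 0)) = (\<Sum>k<n. if k = j then X j else 0)"
    by (rule sum.cong) auto
  also have "\<dots> = (if j < n then X j else 0)" by (subst sum.delta) auto
  finally show ?thesis .
qed

definition hh :: "nat \<Rightarrow> nat \<Rightarrow> (nat \<Rightarrow> complex) \<Rightarrow> real \<Rightarrow> complex mat" where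
  "hh n m v t = (\<lambda>i j. if i < n \<and> j < n then
      (if i = j then 1 else 0) - ((if i = m then 1 else 0) - v i) * cnj ((if j = m then 1 else 0) - v j) / complex_of_real (1 - t)
     else 0)"

lemma householder:
  fixes v :: "nat \<Rightarrow> complex"
  assumes m: "m < n" and norm: "(\<Sum>k<n. v k * cnj (v k)) = 1" and vm: "v m = complex_of_real t"
  shows "cun n (hh n m v t) \<and> cst n (hh n m v t) = hh n m v t \<and> (\<forall>i<n. hh n m v t i m = v i)"
proof -
  define w where "w = (\<lambda>i. (if i = m then 1 else 0) - v i)"
  define c where "c = complex_of_real (1 - t)"
  have H: "hh n m v t = (\<lambda>i j. if i < n \<and> j < n then (if i = j then 1 else 0) - w i * cnj (w j) / c else 0)"
    unfolding hh_def w_def c_def by (rule refl)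
  have cc: "cnj c = c" by (simp add: c_def)
  have wm: "w m = c" by (simp add: w_def c_def vm)
  have ww: "(\<Sum>k<n. w k * cnj (w k)) = 2 * c"
  proof -
    have "(\<Sum>k<n. w k * cnj (w k)) = (\<Sum>k<n. (if k = m then 1 else 0) - (if k = m then cnj (v k) else 0)
           - (if k = m then v k else 0) + v k * cnj (v k))"
      by (rule sum.cong) (auto simp: w_def algebra_simps)
    also have "\<dots> = 1 - cnj (v m) - v m + 1"
      using m norm by (simp add: sum.distrib sum_subtractf)
    finally show ?thesis by (simp add: vm c_def)
  qed
  have sym: "cst n (hh n m v t) = hh n m v t"
    unfolding H cst_def by (auto intro!: ext simp: cc)
  show ?thesis
  proof (cases "c = 0")
    case True
    have "(\<Sum>k<n. complex_of_real ((cmod (w k))\<^sup>2)) = 0"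
      using ww True by (simp only: complex_norm_square) simp
    then have "(\<Sum>k<n. (cmod (w k))\<^sup>2) = 0"
      by (metis of_real_eq_0_iff of_real_sum)
    then have "\<forall>k\<in>{..<n}. (cmod (w k))\<^sup>2 = 0"
      by (subst (asm) sum_nonneg_eq_0_iff) auto
    then have w0: "\<And>k. k < n \<Longrightarrow> w k = 0" by auto
    have Hid: "hh n m v t = cid n"
      unfolding H cid_def using w0 by (auto intro!: ext)
    have vv: "\<And>i. i < n \<Longrightarrow> v i = (if i = m then 1 else 0)"
      using w0 unfolding w_def by (metis eq_iff_diff_eq_0)
    show ?thesis
      using vv m cun_cid[of n] cst_cid[of n] by (simp add: Hid) (simp add: cid_def)
  next
    case False
    have HH: "cm n (hh n m v t) (hh n m v t) = cid n"
    proof (rule ext, rule ext)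
      fix i j
      show "cm n (hh n m v t) (hh n m v t) i j = cid n i j"
      proof (cases "i < n \<and> j < n")
        case True
        have "(\<Sum>k<n. ((if i = k then 1 else 0) - w i * cnj (w k) / c) * ((if k = j then 1 else 0) - w k * cnj (w j) / c))
          = (\<Sum>k<n. (if i = k then 1 else 0) * (if k = j then 1 else 0)
              - (if i = k then 1 else 0) * (w k * cnj (w j) / c)
              - (w i * cnj (w k) / c) * (if k = j then 1 else 0)
              + (w i * cnj (w j) / (c * c)) * (w k * cnj (w k)))"
          by (rule sum.cong) (auto simp: algebra_simps)
        also have "\<dots> = (\<Sum>k<n. (if i = k then 1 else 0) * (if k = j then 1 else 0))
              - (\<Sum>k<n. (if i = k then 1 else 0) * (w k * cnj (w j) / c))
              - (\<Sum>k<n. (w i * cnj (w k) / c) * (if k = j then 1 else 0))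
              + (w i * cnj (w j) / (c * c)) * (\<Sum>k<n. w k * cnj (w k))"
          by (simp add: sum.distrib sum_subtractf sum_distrib_left)
        also have "\<dots> = (if i = j then 1 else 0) - w i * cnj (w j) / c - w i * cnj (w j) / c
              + (w i * cnj (w j) / (c * c)) * (2 * c)"
          using True by (simp only: sum_delta_left sum_delta_right ww) simp
        also have "\<dots> = (if i = j then 1 else 0)"
          using False by (simp add: field_simps)
        finally show ?thesis using True by (simp add: cm_def H cid_def)
      qed (auto simp: cm_def cid_def)
    qed
    have col: "\<forall>i<n. hh n m v t i m = v i"
      using m False by (auto simp: H wm cc) (auto simp: w_def c_def vm)
    show ?thesis using HH sym col by (simp add: cun_def zo_def H)
  qed
qed


lemma cnj_mult_self: "cnj z * z = complex_of_real (cmod z) * complex_of_real (cmod z)"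
  by (metis complex_norm_square mult.commute of_real_mult power2_eq_square)

definition std :: "nat \<Rightarrow> nat \<Rightarrow> complex mat" where
  "std n r = (\<lambda>i j. if i = j \<and> i < n \<and> n - r \<le> i then 1 else 0)"
definition ext :: "nat \<Rightarrow> complex mat \<Rightarrow> complex mat" where
  "ext m X = (\<lambda>i j. if i = m \<and> j = m then 1 else X i j)"

lemma zo_ext: "zo m X \<Longrightarrow> zo (Suc m) (ext m X)"
  by (auto simp: zo_def ext_def)

lemma cm_ext: assumes X: "zo m X" and Y: "zo m Y"
  shows "cm (Suc m) (ext m X) (ext m Y) = ext m (cm m X Y)"
proof (rule ext, rule ext)
  fix i j
  show "cm (Suc m) (ext m X) (ext m Y) i j = ext m (cm m X Y) i j"
  proof (cases "i < Suc m \<and> j < Suc m")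
    case True
    have s: "(\<Sum>k<Suc m. ext m X i k * ext m Y k j) = (\<Sum>k<m. X i k * Y k j) + ext m X i m * ext m Y m j"
      by (simp add: ext_def)
    show ?thesis
    proof (cases "i = m")
      case im: True
      have "(\<Sum>k<m. X i k * Y k j) = 0" using X im by (simp add: zo_def)
      then show ?thesis using True im s Y by (auto simp: cm_def ext_def zo_def)
    next
      case False
      then have i: "i < m" using True by auto
      show ?thesis
      proof (cases "j = m")
        case jm: True
        have "(\<Sum>k<m. X i k * Y k j) = 0" using Y jm by (simp add: zo_def)
        then show ?thesis using True jm s X i by (auto simp: cm_def ext_def zo_def)
      next
        case False
        then have j: "j < m" using True by auto
        then show ?thesis using s X i by (auto simp: cm_def ext_def zo_def)
      qed
    qed
  qed (auto simp: cm_def ext_def)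
qed

lemma cst_ext: "zo m X \<Longrightarrow> cst (Suc m) (ext m X) = ext m (cst m X)"
  by (auto simp: cst_def ext_def zo_def intro!: ext)

lemma ext_cid: "ext m (cid m) = cid (Suc m)"
  by (auto simp: cid_def ext_def intro!: ext)

lemma ext_std: "r \<le> m \<Longrightarrow> ext m (std m r) = std (Suc m) (Suc r)"
  by (auto simp: std_def ext_def intro!: ext)

lemma ext_inj: "zo m X \<Longrightarrow> zo m Y \<Longrightarrow> ext m X = ext m Y \<Longrightarrow> X = Y"
  unfolding zo_def ext_def
  by (intro ext) (metis less_irrefl)

lemma cproj_conj: assumes U: "cun n U" and p: "cproj n p"
  shows "cproj n (cm n (cm n U p) (cst n U))"
proof -
  have "cm n (cm n (cm n U p) (cst n U)) (cm n (cm n U p) (cst n U))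
      = cm n (cm n U (cm n p (cm n (cm n (cst n U) U) p))) (cst n U)"
    by (simp add: cm_assoc)
  also have "\<dots> = cm n (cm n U p) (cst n U)"
    using U p by (simp add: cun_def cproj_def cm_cid_left)
  finally have 1: "cm n (cm n (cm n U p) (cst n U)) (cm n (cm n U p) (cst n U)) = cm n (cm n U p) (cst n U)" .
  have 2: "cst n (cm n (cm n U p) (cst n U)) = cm n (cm n U p) (cst n U)"
    using U p by (simp add: cst_cm cst_cst cun_def cproj_def cm_assoc)
  show ?thesis using 1 2 by (simp add: cproj_def)
qed

lemma tr_std: assumes "r \<le> n" shows "tr n (std n r) = of_nat r"
proof -
  have "tr n (std n r) = (\<Sum>i\<in>{..<n}. if i \<in> {n - r..<n} then 1 else 0)"
    unfolding tr_def std_def by (rule sum.cong) auto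
  also have "\<dots> = (\<Sum>i\<in>{n - r..<n}. 1)"
    by (rule sum.mono_neutral_cong_right) auto
  finally show ?thesis using assms by simp
qed

lemma cproj_std: "cproj n (std n r)"
proof -
  have "cm n (std n r) (std n r) = std n r"
  proof (rule ext, rule ext)
    fix i j
    have "(\<Sum>k<n. std n r i k * std n r k j) = (\<Sum>k<n. if k = i then std n r i j else 0)"
      by (rule sum.cong) (auto simp: std_def)
    then show "cm n (std n r) (std n r) i j = std n r i j"
      by (auto simp: cm_def std_def)
  qed
  then show ?thesis by (auto simp: cproj_def zo_def std_def cst_def intro!: ext)
qed

lemma classify: "cproj n p \<Longrightarrow> \<exists>U r. cun n U \<and> r \<le> n \<and> cm n (cm n U p) (cst n U) = std n r"
proof (induction n arbitrary: p)
  case 0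
  show ?case
    by (rule exI[of _ "cid 0"], rule exI[of _ 0])
       (auto simp: cun_cid cm_def std_def intro!: ext)
next
  case (Suc m p)
  let ?n = "Suc m"
  have pz: "zo ?n p" and pp: "cm ?n p p = p" and ps: "cst ?n p = p"
    using Suc.prems by (auto simp: cproj_def)
  show ?case
  proof (cases "\<forall>i j. p i j = 0")
    case True
    then have "p = (\<lambda>i j. 0)" by (intro ext) auto
    then show ?thesis
      by (intro exI[of _ "cid ?n"] exI[of _ 0])
         (auto simp: cun_cid std_def intro!: ext)
  next
    case False
    then obtain i0 j0 where nz: "p i0 j0 \<noteq> 0" by auto
    then have i0: "i0 < ?n" and j0: "j0 < ?n" using pz by (auto simp: zo_def)
    define c where "c = (\<lambda>i. p i j0)"
    define s where "s = (\<Sum>i<?n. (cmod (c i))\<^sup>2)"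
    have s_pos: "s > 0"
    proof -
      have "(cmod (c i0))\<^sup>2 > 0" using nz by (simp add: c_def)
      moreover have "(cmod (c i0))\<^sup>2 \<le> s"
        unfolding s_def by (rule member_le_sum) (use i0 in auto)
      ultimately show ?thesis by linarith
    qed
    define ph where "ph = (if c m = 0 then 1 else cnj (c m) / complex_of_real (cmod (c m)))"
    have ph_abs: "ph * cnj ph = 1"
    proof (cases "c m = 0")
      case True then show ?thesis by (simp add: ph_def)
    next
      case False
      have "ph * cnj ph = (cnj (c m) * c m) / (complex_of_real (cmod (c m)) * complex_of_real (cmod (c m)))"
        using False by (simp add: ph_def)
      also have "cnj (c m) * c m = complex_of_real (cmod (c m)) * complex_of_real (cmod (c m))"
        by (rule cnj_mult_self)
      finally show ?thesis using False by simp
    qed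
    define al where "al = ph / complex_of_real (sqrt s)"
    define v where "v = (\<lambda>i. al * c i)"
    have al_abs: "al * cnj al = 1 / complex_of_real s"
    proof -
      have "al * cnj al = (ph * cnj ph) / (complex_of_real (sqrt s) * complex_of_real (sqrt s))"
        by (simp add: al_def)
      also have "\<dots> = 1 / complex_of_real s"
        using ph_abs s_pos by (simp flip: of_real_mult)
      finally show ?thesis .
    qed
    have vnorm: "(\<Sum>k<?n. v k * cnj (v k)) = 1"
    proof -
      have "(\<Sum>k<?n. v k * cnj (v k)) = (al * cnj al) * (\<Sum>k<?n. c k * cnj (c k))"
        by (simp add: v_def sum_distrib_left algebra_simps)
      also have "(\<Sum>k<?n. c k * cnj (c k)) = complex_of_real s"
        by (simp only: s_def of_real_sum complex_norm_square)
      finally show ?thesis using al_abs s_pos by simp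
    qed
    define t where "t = cmod (c m) / sqrt s"
    have vm: "v m = complex_of_real t"
    proof (cases "c m = 0")
      case True then show ?thesis by (simp add: v_def t_def)
    next
      case False
      have "v m = (cnj (c m) * c m) / complex_of_real (cmod (c m)) / complex_of_real (sqrt s)"
        using False by (simp add: v_def al_def ph_def)
      also have "cnj (c m) * c m = complex_of_real (cmod (c m)) * complex_of_real (cmod (c m))"
        by (rule cnj_mult_self)
      finally show ?thesis using False by (simp add: t_def)
    qed
    have pv: "\<And>i. i < ?n \<Longrightarrow> (\<Sum>k<?n. p i k * v k) = v i"
    proof -
      fix i assume i: "i < ?n"
      have "(\<Sum>k<?n. p i k * v k) = al * (\<Sum>k<?n. p i k * p k j0)"
        by (simp add: v_def c_def sum_distrib_left algebra_simps)
      also have "(\<Sum>k<?n. p i k * p k j0) = cm ?n p p i j0" using i j0 by (simp add: cm_def)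
      finally show "(\<Sum>k<?n. p i k * v k) = v i" using pp by (simp add: v_def c_def)
    qed
    define H where "H = hh ?n m v t"
    have HU: "cun ?n H" and Hs: "cst ?n H = H" and Hcol: "\<And>i. i < ?n \<Longrightarrow> H i m = v i"
      using householder[of m ?n v t] vnorm vm by (auto simp: H_def)
    define B where "B = cm ?n (cm ?n H p) (cst ?n H)"
    have Bp: "cproj ?n B" unfolding B_def by (rule cproj_conj[OF HU Suc.prems])
    have Bcol: "\<And>i. i < ?n \<Longrightarrow> B i m = (if i = m then 1 else 0)"
    proof -
      fix i assume i: "i < ?n"
      have pH: "(\<Sum>l<?n. p k l * H l m) = H k m" if k: "k < ?n" for k
      proof -
        have "(\<Sum>l<?n. p k l * H l m) = (\<Sum>l<?n. p k l * v l)"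
          by (rule sum.cong) (auto simp: Hcol)
        then show ?thesis using pv[OF k] Hcol[OF k] by simp
      qed
      have "B i m = cm ?n H (cm ?n p H) i m" by (simp add: B_def Hs cm_assoc)
      also have "\<dots> = (\<Sum>k<?n. H i k * H k m)" using i unfolding cm_def by (auto intro!: sum.cong simp: pH simp del: sum.lessThan_Suc)
      also have "\<dots> = cm ?n H H i m" using i by (simp add: cm_def)
      also have "cm ?n H H = cid ?n" using HU Hs by (simp add: cun_def)
      finally show "B i m = (if i = m then 1 else 0)" using i by (simp add: cid_def)
    qed
    have Bz: "zo ?n B" and BB: "cm ?n B B = B" and Bs: "cst ?n B = B"
      using Bp by (auto simp: cproj_def)
    have Brow: "\<And>j. j < ?n \<Longrightarrow> B m j = (if j = m then 1 else 0)"
    proof -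
      fix j assume j: "j < ?n"
      have "B m j = cst ?n B m j" using Bs by simp
      also have "\<dots> = cnj (B j m)" using j by (simp add: cst_def)
      finally show "B m j = (if j = m then 1 else 0)" using Bcol[OF j] by auto
    qed
    define p' where "p' = (\<lambda>i j. if i < m \<and> j < m then B i j else 0)"
    have p'z: "zo m p'" by (simp add: zo_def p'_def)
    have Bext: "B = ext m p'"
    proof (intro ext)
      fix i j
      show "B i j = ext m p' i j"
      proof (cases "i = m \<and> j = m")
        case True then show ?thesis using Bcol[of m] by (simp add: ext_def)
      next
        case ne: False
        show ?thesis
        proof (cases "i < m \<and> j < m")
          case True then show ?thesis by (simp add: ext_def p'_def)
        next
          case False
          have "B i j = 0"
          proof (cases "i = m \<and> j < m")
            case True then show ?thesis using Brow[of j] by simp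
          next
            case f2: False
            show ?thesis
            proof (cases "j = m \<and> i < m")
              case True then show ?thesis using Bcol[of i] by simp
            next
              case False
              then have "\<not> (i < Suc m \<and> j < Suc m)" using f2 ne \<open>\<not> (i < m \<and> j < m)\<close> by auto
              then show ?thesis using Bz by (simp add: zo_def)
            qed
          qed
          then show ?thesis using ne False by (simp add: ext_def p'_def)
        qed
      qed
    qed
    have p'p: "cproj m p'"
    proof -
      have "ext m (cm m p' p') = ext m p'" using BB Bext cm_ext[OF p'z p'z] by simp
      then have 1: "cm m p' p' = p'" by (rule ext_inj[OF zo_cm p'z])
      have "ext m (cst m p') = ext m p'" using Bs Bext cst_ext[OF p'z] by simp
      then have 2: "cst m p' = p'" by (rule ext_inj[OF zo_cst p'z])
      show ?thesis using 1 2 p'z by (simp add: cproj_def)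
    qed
    obtain V r where VU: "cun m V" and r: "r \<le> m" and Vp: "cm m (cm m V p') (cst m V) = std m r"
      using Suc.IH[OF p'p] by blast
    have Vz: "zo m V" using VU by (simp add: cun_def)
    define V1 where "V1 = ext m V"
    have V1U: "cun ?n V1"
    proof -
      have "cm ?n V1 (cst ?n V1) = cid ?n"
        using VU Vz by (simp add: V1_def cst_ext cm_ext zo_cst cun_def ext_cid)
      moreover have "cm ?n (cst ?n V1) V1 = cid ?n"
        using VU Vz by (simp add: V1_def cst_ext cm_ext zo_cst cun_def ext_cid)
      ultimately show ?thesis using zo_ext[OF Vz] by (simp add: cun_def V1_def)
    qed
    have V1B: "cm ?n (cm ?n V1 B) (cst ?n V1) = std ?n (Suc r)"
      using Vz p'z Vp r
      by (simp add: V1_def Bext cst_ext cm_ext zo_cst ext_std)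
    define U where "U = cm ?n V1 H"
    have "cm ?n (cm ?n U p) (cst ?n U) = cm ?n (cm ?n V1 B) (cst ?n V1)"
      by (simp add: U_def B_def cst_cm cm_assoc)
    then show ?thesis using V1B cun_mult[OF V1U HU] r
      by (intro exI[of _ U] exI[of _ "Suc r"]) (simp add: U_def)
  qed
qed


lemma zo_mono: "zo n A \<Longrightarrow> n \<le> N \<Longrightarrow> zo N A"
  by (auto simp: zo_def)

lemma cm_mono: assumes A: "zo n A" and "n \<le> N" and B: "zo n B" shows "cm N A B = cm n A B"
proof (rule ext, rule ext)
  fix i j
  show "cm N A B i j = cm n A B i j"
  proof (cases "i < n \<and> j < n")
    case True
    have "(\<Sum>k<N. A i k * B k j) = (\<Sum>k<n. A i k * B k j)"
      by (rule sum.mono_neutral_right) (use A assms(2) in \<open>auto simp: zo_def\<close>)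
    then show ?thesis using True assms(2) by (simp add: cm_def)
  next
    case False
    then show ?thesis using A B by (auto simp: cm_def zo_def intro!: sum.neutral)
  qed
qed

lemma cst_mono: assumes A: "zo n A" and "n \<le> N" shows "cst N A = cst n A"
  using assms by (auto simp: cst_def zo_def intro!: ext)

lemma tr_mono: assumes A: "zo n A" and "n \<le> N" shows "tr N A = tr n A"
  unfolding tr_def
  by (rule sum.mono_neutral_right) (use assms in \<open>auto simp: zo_def\<close>)

lemma cproj_mono: assumes "cproj n p" "n \<le> N" shows "cproj N p"
proof -
  have z: "zo n p" and pp: "cm n p p = p" and ps: "cst n p = p" using assms(1) by (auto simp: cproj_def)
  have "cm N p p = p" using cm_mono[OF z assms(2) z] pp by simp
  moreover have "cst N p = p" using cst_mono[OF z assms(2)] ps by simp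
  ultimately show ?thesis using zo_mono[OF z assms(2)] by (simp add: cproj_def)
qed

lemma tr_conj': assumes "cun n U" "zo n p" shows "tr n (cm n (cm n U p) (cst n U)) = tr n p"
  using tr_conj[OF assms(1), of p] cm_cid_right[OF assms(2)] by simp

lemma cproj_tr_nat: assumes "cproj n p" shows "\<exists>r. tr n p = of_nat r"
proof -
  obtain U r where U: "cun n U" and r: "r \<le> n" and e: "cm n (cm n U p) (cst n U) = std n r"
    using classify[OF assms] by blast
  have "tr n (std n r) = tr n (cm n (cm n U p) (cst n U))" using e by simp
  also have "\<dots> = tr n p" using tr_conj'[OF U] assms by (simp add: cproj_def)
  finally have "tr n p = tr n (std n r)" by simp
  then show ?thesis using tr_std[OF r] by auto
qed

lemma conj_inv: assumes U: "cun n U" and p: "zo n p" and e: "cm n (cm n U p) (cst n U) = S"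
  shows "p = cm n (cm n (cst n U) S) (cst n (cst n U))"
proof -
  have Uz: "zo n U" using U by (simp add: cun_def)
  have "cm n (cm n (cst n U) S) (cst n (cst n U)) = cm n (cm n (cm n (cst n U) U) p) (cm n (cst n U) U)"
    using Uz by (simp add: e[symmetric] cst_cst cm_assoc)
  also have "\<dots> = p" using U p by (simp add: cun_def cm_cid_left cm_cid_right)
  finally show ?thesis by simp
qed

lemma cproj_equiv_tr: assumes p: "cproj n p" and q: "cproj n q" and t: "tr n p = tr n q"
  shows "\<exists>W. cun n W \<and> p = cm n (cm n W q) (cst n W)"
proof -
  obtain U r where U: "cun n U" and r: "r \<le> n" and e: "cm n (cm n U p) (cst n U) = std n r"
    using classify[OF p] by blast
  obtain V s where V: "cun n V" and s: "s \<le> n" and f: "cm n (cm n V q) (cst n V) = std n s"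
    using classify[OF q] by blast
  have pz: "zo n p" and qz: "zo n q" using p q by (auto simp: cproj_def)
  have "of_nat r = (of_nat s :: complex)"
    using tr_conj'[OF U pz] tr_conj'[OF V qz] e f t tr_std[OF r] tr_std[OF s] by simp
  then have rs: "r = s" by simp
  have Uz: "zo n U" and Vz: "zo n V" using U V by (auto simp: cun_def)
  define W where "W = cm n (cst n U) V"
  have "p = cm n (cm n (cst n U) (std n r)) (cst n (cst n U))" by (rule conj_inv[OF U pz e])
  also have "std n r = cm n (cm n V q) (cst n V)" using f rs by simp
  also have "cm n (cm n (cst n U) (cm n (cm n V q) (cst n V))) (cst n (cst n U)) = cm n (cm n W q) (cst n W)"
    using Uz by (simp add: W_def cst_cm cst_cst cm_assoc)
  finally show ?thesis using cun_mult[OF cun_cst[OF U] V] by (auto simp: W_def)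
qed

definition rk :: "nat \<times> complex mat \<Rightarrow> nat" where
  "rk P = (SOME r. tr (fst P) (snd P) = of_nat r)"

lemma rk: "cproj n p \<Longrightarrow> tr n p = of_nat (rk (n, p))"
  unfolding rk_def fst_conv snd_conv by (rule someI_ex[OF cproj_tr_nat])

lemma PC: "projector complex_salg P \<longleftrightarrow> cproj (fst P) (snd P)"
  by (cases P) (simp add: projector_C)

lemma proj_equiv_C_dir1:
  assumes h: "proj_equiv complex_salg (n, p) (m, q)"
  shows "cproj n p \<and> cproj m q \<and> rk (n, p) = rk (m, q)"
proof -
  have "projector complex_salg (n, p)" "projector complex_salg (m, q)"
    using h unfolding proj_equiv_def by blast+
  then have cp: "cproj n p" and cq: "cproj m q" by (simp_all only: projector_C)
  obtain N u where N: "n \<le> N" "m \<le> N" and u: "unitary complex_salg N u"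
    and e: "p = mmul complex_salg N (mmul complex_salg N u q) (mstar complex_salg N u)"
    using h unfolding proj_equiv_def fst_conv snd_conv by blast
  have u': "cun N u" using u by (simp only: unitary_C)
  have e': "p = cm N (cm N u q) (cst N u)" using e by (simp only: mmul_C mstar_C)
  have qz: "zo m q" and pz: "zo n p" using cp cq by (simp_all add: cproj_def)
  have qN: "zo N q" by (rule zo_mono[OF qz N(2)])
  have "tr N p = tr N q" unfolding e' by (rule tr_conj'[OF u' qN])
  moreover have "tr N p = tr n p" by (rule tr_mono[OF pz N(1)])
  moreover have "tr N q = tr m q" by (rule tr_mono[OF qz N(2)])
  ultimately have "tr n p = tr m q" by simp
  then have "(of_nat (rk (n, p)) :: complex) = of_nat (rk (m, q))"
    by (simp only: rk[OF cp, symmetric] rk[OF cq, symmetric])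
  then have "rk (n, p) = rk (m, q)" by (simp only: of_nat_eq_iff)
  then show ?thesis using cp cq by blast
qed

lemma proj_equiv_C_dir2:
  assumes cp: "cproj n p" and cq: "cproj m q" and r: "rk (n, p) = rk (m, q)"
  shows "proj_equiv complex_salg (n, p) (m, q)"
proof -
  define N where "N = max n m"
  have N: "n \<le> N" "m \<le> N" by (auto simp: N_def)
  have qz: "zo m q" and pz: "zo n p" using cp cq by (simp_all add: cproj_def)
  have "tr N p = tr n p" by (rule tr_mono[OF pz N(1)])
  also have "\<dots> = of_nat (rk (n, p))" by (rule rk[OF cp])
  also have "\<dots> = of_nat (rk (m, q))" using r by simp
  also have "\<dots> = tr m q" by (rule rk[OF cq, symmetric])
  also have "\<dots> = tr N q" by (rule tr_mono[OF qz N(2), symmetric])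
  finally have t: "tr N p = tr N q" .
  obtain W where W: "cun N W" "p = cm N (cm N W q) (cst N W)"
    using cproj_equiv_tr[OF cproj_mono[OF cp N(1)] cproj_mono[OF cq N(2)] t] by blast
  have W1: "unitary complex_salg N W" using W(1) by (simp only: unitary_C)
  have W2: "p = mmul complex_salg N (mmul complex_salg N W q) (mstar complex_salg N W)"
    using W(2) by (simp only: mmul_C mstar_C)
  have pr: "projector complex_salg (n, p)" "projector complex_salg (m, q)"
    using cp cq by (simp_all only: projector_C)
  show ?thesis unfolding proj_equiv_def fst_conv snd_conv
    using pr N W1 W2 by blast
qed

lemma proj_equiv_C: "proj_equiv complex_salg P Q \<longleftrightarrow>
   projector complex_salg P \<and> projector complex_salg Q \<and> rk P = rk Q"
proof (cases P, cases Q)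
  fix n p m q assume PQ: "P = (n, p)" "Q = (m, q)"
  show ?thesis unfolding PQ projector_C
    using proj_equiv_C_dir1[of n p m q] proj_equiv_C_dir2[of n p m q] by blast
qed



lemma sum_split_add: "(\<Sum>k<(n::nat) + (m::nat). (f k :: 'a :: comm_monoid_add)) = (\<Sum>k<n. f k) + (\<Sum>k<m. f (n + k))"
  by (induction m) (simp_all add: add.assoc)

lemma sa_zero_C: "sa_zero complex_salg = 0" by (simp add: complex_salg_def)

definition dm :: "nat \<Rightarrow> nat \<Rightarrow> complex mat \<Rightarrow> complex mat \<Rightarrow> complex mat" where
  "dm n m p q = (\<lambda>i j. if i < n \<and> j < n then p i j
                   else if n \<le> i \<and> n \<le> j \<and> i < n + m \<and> j < n + m then q (i - n) (j - n)
                   else 0)"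

lemma dsum_C: "dsum complex_salg (n, p) (m, q) = (n + m, dm n m p q)"
  unfolding dsum_def dm_def prod.case sa_zero_C by (rule refl)

lemma cproj_dm: assumes p: "cproj n p" and q: "cproj m q"
  shows "cproj (n + m) (dm n m p q)"
proof -
  have pz: "zo n p" and pp: "cm n p p = p" and ps: "cst n p = p"
    and qz: "zo m q" and qq: "cm m q q = q" and qs: "cst m q = q"
    using p q by (auto simp: cproj_def)
  let ?D = "dm n m p q"
  have z: "zo (n + m) ?D" by (auto simp: zo_def dm_def)
  have s: "cst (n + m) ?D = ?D"
  proof (intro ext)
    fix i j
    have a: "i < n \<and> j < n \<Longrightarrow> cnj (p j i) = p i j" using ps by (metis cst_def)
    have b: "cnj (q (j - n) (i - n)) = q (i - n) (j - n)" if "n \<le> i" "n \<le> j" "i < n + m" "j < n + m"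
    proof -
      have "i - n < m" "j - n < m" using that by auto
      then show ?thesis using qs by (metis cst_def)
    qed
    show "cst (n + m) ?D i j = ?D i j"
      using a b by (auto simp: cst_def dm_def)
  qed
  have mm: "cm (n + m) ?D ?D = ?D"
  proof (intro ext)
    fix i j
    show "cm (n + m) ?D ?D i j = ?D i j"
    proof (cases "i < n + m \<and> j < n + m")
      case False then show ?thesis by (auto simp: cm_def dm_def)
    next
      case True
      have e: "cm (n + m) ?D ?D i j = (\<Sum>k<n. ?D i k * ?D k j) + (\<Sum>k<m. ?D i (n + k) * ?D (n + k) j)"
        using True by (simp add: cm_def sum_split_add)
      show ?thesis
      proof (cases "i < n")
        case i: True
        have 2: "(\<Sum>k<m. ?D i (n + k) * ?D (n + k) j) = 0" using i by (simp add: dm_def)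
        show ?thesis
        proof (cases "j < n")
          case j: True
          have "(\<Sum>k<n. ?D i k * ?D k j) = cm n p p i j" using i j by (simp add: dm_def cm_def)
          then show ?thesis using e 2 pp i j by (simp add: dm_def)
        next
          case j: False
          have "(\<Sum>k<n. ?D i k * ?D k j) = 0" using i j by (simp add: dm_def)
          then show ?thesis using e 2 i j by (simp add: dm_def)
        qed
      next
        case i: False
        have 1: "(\<Sum>k<n. ?D i k * ?D k j) = 0" using i by (simp add: dm_def)
        show ?thesis
        proof (cases "j < n")
          case j: True
          have "(\<Sum>k<m. ?D i (n + k) * ?D (n + k) j) = 0" using j by (simp add: dm_def)
          then show ?thesis using e 1 i j by (simp add: dm_def)
        next
          case j: False
          have ij: "i - n < m" "j - n < m" using i j True by auto
          have "(\<Sum>k<m. ?D i (n + k) * ?D (n + k) j) = cm m q q (i - n) (j - n)"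
            using i j True ij by (simp add: dm_def cm_def)
          then show ?thesis using e 1 qq i j True by (simp add: dm_def)
        qed
      qed
    qed
  qed
  show ?thesis using z s mm by (simp add: cproj_def)
qed

lemma tr_dm: "tr (n + m) (dm n m p q) = tr n p + tr m q"
  by (simp add: tr_def sum_split_add dm_def)

lemma rk_dm: assumes p: "cproj n p" and q: "cproj m q"
  shows "rk (n + m, dm n m p q) = rk (n, p) + rk (m, q)"
proof -
  have "(of_nat (rk (n + m, dm n m p q)) :: complex) = of_nat (rk (n, p) + rk (m, q))"
    using rk[OF cproj_dm[OF p q]] rk[OF p] rk[OF q] tr_dm[of n m p q] by simp
  then show ?thesis by (simp only: of_nat_eq_iff)
qed

lemma projector_dsum_C: "projector complex_salg P \<Longrightarrow> projector complex_salg Q \<Longrightarrow>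
   projector complex_salg (dsum complex_salg P Q) \<and> rk (dsum complex_salg P Q) = rk P + rk Q"
  by (cases P, cases Q) (simp add: dsum_C projector_C cproj_dm rk_dm)

lemma zero_proj_C: "zero_proj complex_salg = (0, \<lambda>i j. 0)"
  by (simp add: zero_proj_def complex_salg_def)

lemma cproj_zero: "cproj n (\<lambda>i j. 0)"
  by (simp add: cproj_def zo_def cst_def fun_eq_iff)

lemma rk_zero: "rk (n, \<lambda>i j. 0) = 0"
proof -
  have "(of_nat (rk (n, \<lambda>i j. 0)) :: complex) = 0"
    using rk[OF cproj_zero[of n]] by (simp add: tr_def)
  then show ?thesis by simp
qed

lemma rk_std: "rk (k, std k k) = k"
  using rk[OF cproj_std[of k k]] tr_std[of k k] by simp

lemma grel_C: "((a, b), (c, d)) \<in> grel complex_salg \<longleftrightarrow>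
   projector complex_salg a \<and> projector complex_salg b \<and> projector complex_salg c \<and> projector complex_salg d
   \<and> rk a + rk d = rk c + rk b"
proof
  assume h: "((a, b), (c, d)) \<in> grel complex_salg"
  then obtain e where pr: "projector complex_salg a" "projector complex_salg b" "projector complex_salg c"
     "projector complex_salg d" "projector complex_salg e"
    and eq: "proj_equiv complex_salg (dsum complex_salg (dsum complex_salg a d) e) (dsum complex_salg (dsum complex_salg c b) e)"
    by (auto simp: grel_def)
  have "rk a + rk d + rk e = rk c + rk b + rk e"
    using eq pr by (simp add: proj_equiv_C projector_dsum_C)
  then show "projector complex_salg a \<and> projector complex_salg b \<and> projector complex_salg c \<and> projector complex_salg d
   \<and> rk a + rk d = rk c + rk b" using pr by simp
next
  assume h: "projector complex_salg a \<and> projector complex_salg b \<and> projector complex_salg c \<and> projector complex_salg d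
   \<and> rk a + rk d = rk c + rk b"
  have z: "projector complex_salg (zero_proj complex_salg)" "rk (zero_proj complex_salg) = 0"
    by (simp_all add: zero_proj_C projector_C cproj_zero rk_zero)
  have "proj_equiv complex_salg (dsum complex_salg (dsum complex_salg a d) (zero_proj complex_salg))
        (dsum complex_salg (dsum complex_salg c b) (zero_proj complex_salg))"
    using h z by (simp add: proj_equiv_C projector_dsum_C)
  then show "((a, b), (c, d)) \<in> grel complex_salg"
    unfolding grel_def mem_Collect_eq case_prod_conv using h z by blast
qed


definition PPs :: "'a salg \<Rightarrow> ((nat \<times> 'a mat) \<times> (nat \<times> 'a mat)) set" where
  "PPs A = {x. projector A (fst x) \<and> projector A (snd x)}"

definition fib :: "'a salg \<Rightarrow> (((nat \<times> 'a mat) \<times> (nat \<times> 'a mat)) \<Rightarrow> int) \<Rightarrow> int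
   \<Rightarrow> ((nat \<times> 'a mat) \<times> (nat \<times> 'a mat)) set" where
  "fib A v k = {x \<in> PPs A. v x = k}"

locale kgen =
  fixes A :: "'a salg" and v :: "((nat \<times> 'a mat) \<times> (nat \<times> 'a mat)) \<Rightarrow> int"
  assumes g1: "\<And>x y. (x, y) \<in> grel A \<longleftrightarrow> x \<in> PPs A \<and> y \<in> PPs A \<and> v x = v y"
    and g2: "\<And>x y. x \<in> PPs A \<Longrightarrow> y \<in> PPs A \<Longrightarrow>
        (dsum A (fst x) (fst y), dsum A (snd x) (snd y)) \<in> PPs A \<and>
        v (dsum A (fst x) (fst y), dsum A (snd x) (snd y)) = v x + v y"
    and g3: "(zero_proj A, zero_proj A) \<in> PPs A" "v (zero_proj A, zero_proj A) = 0"
    and g4: "\<And>k. \<exists>x \<in> PPs A. v x = k"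
begin

abbreviation F where "F \<equiv> fib A v"

lemma class_eq: "x \<in> PPs A \<Longrightarrow> grel A `` {x} = F (v x)"
  by (auto simp: fib_def g1)

lemma F_ne: "F k \<noteq> {}"
  using g4[of k] by (auto simp: fib_def)

lemma F_inj: "F k = F l \<Longrightarrow> k = l"
proof -
  assume e: "F k = F l"
  obtain x where "x \<in> F k" using F_ne by blast
  then have "x \<in> F l" using e by simp
  then show "k = l" using \<open>x \<in> F k\<close> by (auto simp: fib_def)
qed

lemma carrier_K0: "carrier (K0 A) = range F"
proof
  show "carrier (K0 A) \<subseteq> range F"
  proof
    fix X assume "X \<in> carrier (K0 A)"
    then obtain a b where X: "X = grel A `` {(a, b)}" and p: "projector A a" "projector A b"
      by (auto simp: K0_def)
    then have "(a, b) \<in> PPs A" by (simp add: PPs_def)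
    then show "X \<in> range F" using X class_eq by auto
  qed
next
  show "range F \<subseteq> carrier (K0 A)"
  proof
    fix X assume "X \<in> range F"
    then obtain k where X: "X = F k" by auto
    obtain x where x: "x \<in> PPs A" "v x = k" using g4 by blast
    have "X = grel A `` {(fst x, snd x)}" using X x class_eq by simp
    moreover have "projector A (fst x)" "projector A (snd x)" using x by (auto simp: PPs_def)
    ultimately have "\<exists>a b. X = grel A `` {(a, b)} \<and> projector A a \<and> projector A b" by blast
    then show "X \<in> carrier (K0 A)" unfolding K0_def by simp
  qed
qed

lemma mult_K0: "F k \<otimes>\<^bsub>K0 A\<^esub> F l = F (k + l)"
proof -
  have "F k \<otimes>\<^bsub>K0 A\<^esub> F l = (\<Union>x\<in>F k. \<Union>y\<in>F l. grel A `` {(dsum A (fst x) (fst y), dsum A (snd x) (snd y))})"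
    by (simp add: K0_def)
  also have "\<dots> = (\<Union>x\<in>F k. \<Union>y\<in>F l. F (k + l))"
  proof (intro SUP_cong refl)
    fix x y assume x: "x \<in> F k" and y: "y \<in> F l"
    then have "x \<in> PPs A" "y \<in> PPs A" "v x = k" "v y = l" by (auto simp: fib_def)
    then show "grel A `` {(dsum A (fst x) (fst y), dsum A (snd x) (snd y))} = F (k + l)"
      using g2 class_eq by auto
  qed
  also have "\<dots> = F (k + l)" using F_ne by auto
  finally show ?thesis .
qed

lemma one_K0: "\<one>\<^bsub>K0 A\<^esub> = F 0"
  using class_eq[OF g3(1)] g3(2) by (simp add: K0_def)

lemma group_K0: "group (K0 A)"
proof (rule groupI)
  fix x y assume "x \<in> carrier (K0 A)" "y \<in> carrier (K0 A)"
  then show "x \<otimes>\<^bsub>K0 A\<^esub> y \<in> carrier (K0 A)" by (auto simp: carrier_K0 mult_K0)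
next
  show "\<one>\<^bsub>K0 A\<^esub> \<in> carrier (K0 A)" by (simp add: carrier_K0 one_K0)
next
  fix x y z assume "x \<in> carrier (K0 A)" "y \<in> carrier (K0 A)" "z \<in> carrier (K0 A)"
  then show "x \<otimes>\<^bsub>K0 A\<^esub> y \<otimes>\<^bsub>K0 A\<^esub> z = x \<otimes>\<^bsub>K0 A\<^esub> (y \<otimes>\<^bsub>K0 A\<^esub> z)"
    by (auto simp: carrier_K0 mult_K0 add.assoc)
next
  fix x assume "x \<in> carrier (K0 A)"
  then show "\<one>\<^bsub>K0 A\<^esub> \<otimes>\<^bsub>K0 A\<^esub> x = x" by (auto simp: carrier_K0 mult_K0 one_K0)
next
  fix x assume "x \<in> carrier (K0 A)"
  then obtain k where "x = F k" by (auto simp: carrier_K0)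
  then show "\<exists>y\<in>carrier (K0 A). y \<otimes>\<^bsub>K0 A\<^esub> x = \<one>\<^bsub>K0 A\<^esub>"
    by (intro bexI[of _ "F (- k)"]) (auto simp: carrier_K0 mult_K0 one_K0)
qed

lemma iso_Z: "K0 A \<cong> integer_group"
proof -
  define phi where "phi = (\<lambda>X. THE k. X = F k)"
  have phiF: "phi (F k) = k" for k
    unfolding phi_def by (rule the_equality) (auto dest: F_inj)
  have "phi \<in> iso (K0 A) integer_group"
  proof (rule isoI)
    show "phi \<in> hom (K0 A) integer_group"
      by (rule homI) (auto simp: carrier_K0 mult_K0 phiF)
    show "bij_betw phi (carrier (K0 A)) (carrier integer_group)"
      unfolding carrier_K0 carrier_integer_group bij_betw_def inj_on_def
      by (auto simp: phiF image_iff)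
  qed
  then show ?thesis by (rule is_isoI)
qed

end


definition le2 :: "nat \<times> nat \<Rightarrow> nat \<times> nat \<Rightarrow> bool" where
  "le2 M m \<longleftrightarrow> fst m + snd m < fst M + snd M \<or> (fst m + snd m = fst M + snd M \<and> fst m \<le> fst M)"

lemma arith_lead:
  assumes "le2 (a, b) (p, q)" "le2 (a, b) (r, s)" "k \<le> q" "k \<le> r"
    "p + r - k = 2 * a" "q + s - k = 2 * b"
  shows "p = a \<and> q = b \<and> r = a \<and> s = b \<and> k = 0"
  using assms unfolding le2_def fst_conv snd_conv by linarith

lemma lead_mul:
  assumes bf: "\<forall>m\<in>supp2 f. le2 M m" and bg: "\<forall>m\<in>supp2 g. le2 M m"
    and ff: "finite (supp2 f)" and fg: "finite (supp2 g)"
  shows "moyal_mul \<theta> f g (2 * fst M, 2 * snd M) = f M * g M"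
proof -
  obtain a b where M: "M = (a, b)" by (cases M)
  define c where "c = f M * g M"
  have inner: "(\<Sum>k\<in>{..min q r}.
       (if p + r - k = 2 * a \<and> q + s - k = 2 * b
        then f (p, q) * g (r, s) * of_nat (q choose k) * of_nat (r choose k) * of_nat (fact k)
             * (\<i> * of_real \<theta>) ^ k
        else 0)) = (if (p, q) = M \<and> (r, s) = M then c else 0)"
    if pq: "(p, q) \<in> supp2 f" and rs: "(r, s) \<in> supp2 g" for p q r s
  proof -
    have l1: "le2 (a, b) (p, q)" using bf pq M by auto
    have l2: "le2 (a, b) (r, s)" using bg rs M by auto
    have "(\<Sum>k\<in>{..min q r}.
       (if p + r - k = 2 * a \<and> q + s - k = 2 * b
        then f (p, q) * g (r, s) * of_nat (q choose k) * of_nat (r choose k) * of_nat (fact k)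
             * (\<i> * of_real \<theta>) ^ k
        else 0)) = (\<Sum>k\<in>{..min q r}. if k = 0 then (if (p, q) = M \<and> (r, s) = M then c else 0) else 0)"
    proof (rule sum.cong[OF refl])
      fix k assume k: "k \<in> {..min q r}"
      show "(if p + r - k = 2 * a \<and> q + s - k = 2 * b
        then f (p, q) * g (r, s) * of_nat (q choose k) * of_nat (r choose k) * of_nat (fact k)
             * (\<i> * of_real \<theta>) ^ k
        else 0) = (if k = 0 then (if (p, q) = M \<and> (r, s) = M then c else 0) else 0)"
      proof (cases "p + r - k = 2 * a \<and> q + s - k = 2 * b")
        case True
        then have "p = a \<and> q = b \<and> r = a \<and> s = b \<and> k = 0"
          using arith_lead[OF l1 l2] k by auto
        then show ?thesis using True by (auto simp: M c_def)
      next
        case False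
        then show ?thesis by (auto simp: M)
      qed
    qed
    also have "\<dots> = (if (p, q) = M \<and> (r, s) = M then c else 0)"
      by (subst sum.delta) auto
    finally show ?thesis .
  qed
  have "moyal_mul \<theta> f g (2 * fst M, 2 * snd M) =
     (\<Sum>x\<in>supp2 f. \<Sum>y\<in>supp2 g. if x = M \<and> y = M then c else 0)"
    unfolding moyal_mul_def M fst_conv snd_conv prod.case
  proof (rule sum.cong[OF refl])
    fix x assume x: "x \<in> supp2 f"
    obtain p q where xpq: "x = (p, q)" by (cases x)
    show "(case x of (p, q) \<Rightarrow> \<Sum>(r, s)\<in>supp2 g. \<Sum>k\<in>{..min q r}.
       (if p + r - k = 2 * a \<and> q + s - k = 2 * b
        then f (p, q) * g (r, s) * of_nat (q choose k) * of_nat (r choose k) * of_nat (fact k)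
             * (\<i> * of_real \<theta>) ^ k
        else 0)) = (\<Sum>y\<in>supp2 g. if x = (a, b) \<and> y = (a, b) then c else 0)"
      unfolding xpq prod.case
    proof (rule sum.cong[OF refl])
      fix y assume y: "y \<in> supp2 g"
      obtain r s where yrs: "y = (r, s)" by (cases y)
      show "(case y of (r, s) \<Rightarrow> \<Sum>k\<in>{..min q r}.
       (if p + r - k = 2 * a \<and> q + s - k = 2 * b
        then f (p, q) * g (r, s) * of_nat (q choose k) * of_nat (r choose k) * of_nat (fact k)
             * (\<i> * of_real \<theta>) ^ k
        else 0)) = (if (p, q) = (a, b) \<and> y = (a, b) then c else 0)"
        using inner[of p q r s] x y unfolding xpq yrs prod.case M by simp
    qed
  qed
  also have "\<dots> = (\<Sum>x\<in>supp2 f. if x = M then (if M \<in> supp2 g then c else 0) else 0)"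
    by (intro sum.cong refl) (auto simp: fg)
  also have "\<dots> = (if M \<in> supp2 f then (if M \<in> supp2 g then c else 0) else 0)"
    by (subst sum.delta) (auto simp: ff)
  also have "\<dots> = c" by (auto simp: c_def supp2_def)
  finally show ?thesis by (simp add: c_def)
qed

lemma lead_star:
  assumes bf: "\<forall>m\<in>supp2 f. le2 M m" and ff: "finite (supp2 f)"
  shows "moyal_star \<theta> f M = cnj (f M)"
proof -
  obtain a b where M: "M = (a, b)" by (cases M)
  have inner: "(\<Sum>k\<in>{..min p q}.
       (if p - k = a \<and> q - k = b
        then cnj (f (p, q)) * of_nat (q choose k) * of_nat (p choose k) * of_nat (fact k)
             * (\<i> * of_real \<theta>) ^ k
        else 0)) = (if (p, q) = M then cnj (f M) else 0)"
    if pq: "(p, q) \<in> supp2 f" for p q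
  proof -
    have l1: "le2 (a, b) (p, q)" using bf pq M by auto
    have "(\<Sum>k\<in>{..min p q}.
       (if p - k = a \<and> q - k = b
        then cnj (f (p, q)) * of_nat (q choose k) * of_nat (p choose k) * of_nat (fact k)
             * (\<i> * of_real \<theta>) ^ k
        else 0)) = (\<Sum>k\<in>{..min p q}. if k = 0 then (if (p, q) = M then cnj (f M) else 0) else 0)"
    proof (rule sum.cong[OF refl])
      fix k assume k: "k \<in> {..min p q}"
      show "(if p - k = a \<and> q - k = b
        then cnj (f (p, q)) * of_nat (q choose k) * of_nat (p choose k) * of_nat (fact k)
             * (\<i> * of_real \<theta>) ^ k
        else 0) = (if k = 0 then (if (p, q) = M then cnj (f M) else 0) else 0)"
      proof (cases "p - k = a \<and> q - k = b")
        case True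
        moreover have "k \<le> p" "k \<le> q" using k by auto
        ultimately have "p = a \<and> q = b \<and> k = 0" using l1 unfolding le2_def fst_conv snd_conv by linarith
        then show ?thesis using True by (auto simp: M)
      next
        case False
        then show ?thesis by (auto simp: M)
      qed
    qed
    also have "\<dots> = (if (p, q) = M then cnj (f M) else 0)"
      by (subst sum.delta) auto
    finally show ?thesis .
  qed
  have "moyal_star \<theta> f M = (\<Sum>x\<in>supp2 f. if x = M then cnj (f M) else 0)"
    unfolding moyal_star_def M prod.case
  proof (rule sum.cong[OF refl])
    fix x assume x: "x \<in> supp2 f"
    obtain p q where xpq: "x = (p, q)" by (cases x)
    show "(case x of (p, q) \<Rightarrow> \<Sum>k\<in>{..min p q}.
       (if p - k = a \<and> q - k = b
        then cnj (f (p, q)) * of_nat (q choose k) * of_nat (p choose k) * of_nat (fact k)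
             * (\<i> * of_real \<theta>) ^ k
        else 0)) = (if x = (a, b) then cnj (f (a, b)) else 0)"
      using inner[of p q] x unfolding xpq prod.case M by simp
  qed
  also have "\<dots> = (if M \<in> supp2 f then cnj (f M) else 0)"
    by (subst sum.delta) (auto simp: ff)
  also have "\<dots> = cnj (f M)" by (auto simp: supp2_def)
  finally show ?thesis .
qed

lemma bound_star:
  assumes bf: "\<forall>m\<in>supp2 f. le2 M m"
  shows "\<forall>m\<in>supp2 (moyal_star \<theta> f). le2 M m"
proof
  fix m assume m: "m \<in> supp2 (moyal_star \<theta> f)"
  obtain a b where mab: "m = (a, b)" by (cases m)
  define T where "T = (\<lambda>p q k. (if p - k = a \<and> q - k = b
        then cnj (f (p, q)) * of_nat (q choose k) * of_nat (p choose k) * of_nat (fact k)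
             * (\<i> * of_real \<theta>) ^ k
        else (0::complex)))"
  have "moyal_star \<theta> f (a, b) \<noteq> 0" using m mab by (simp add: supp2_def)
  then have "(\<Sum>x\<in>supp2 f. case x of (p, q) \<Rightarrow> \<Sum>k\<in>{..min p q}. T p q k) \<noteq> 0"
    unfolding moyal_star_def T_def prod.case .
  then obtain x where x: "x \<in> supp2 f" and nz: "(case x of (p, q) \<Rightarrow> \<Sum>k\<in>{..min p q}. T p q k) \<noteq> 0"
    by (rule sum.not_neutral_contains_not_neutral)
  obtain p q where xpq: "x = (p, q)" by (cases x)
  have "(\<Sum>k\<in>{..min p q}. T p q k) \<noteq> 0" using nz unfolding xpq prod.case .
  then obtain k where k: "k \<in> {..min p q}" and tk: "T p q k \<noteq> 0"
    by (rule sum.not_neutral_contains_not_neutral)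
  have e: "p - k = a" "q - k = b" using tk unfolding T_def by (meson)+
  have "le2 M (p, q)" using bf x xpq by blast
  moreover have "k \<le> p" "k \<le> q" using k by auto
  moreover obtain Ma Mb where M: "M = (Ma, Mb)" by (cases M)
  ultimately show "le2 M m" using e unfolding le2_def M mab fst_conv snd_conv by linarith
qed


lemma asum_A: "asum (A_theta \<theta>) xs m = (\<Sum>x\<leftarrow>xs. x m)"
  by (induction xs) (auto simp: asum_def A_theta_def)

lemma mmul_A: "mmul (A_theta \<theta>) n P Q i j m =
   (if i < n \<and> j < n then (\<Sum>k<n. moyal_mul \<theta> (P i k) (Q k j) m) else 0)"
proof (cases "i < n \<and> j < n")
  case True
  have "mmul (A_theta \<theta>) n P Q i j m = (\<Sum>x\<leftarrow>map (\<lambda>k. moyal_mul \<theta> (P i k) (Q k j)) [0..<n]. x m)"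
    using True by (simp add: mmul_def asum_A comp_def, simp add: A_theta_def)
  also have "\<dots> = (\<Sum>k\<leftarrow>[0..<n]. moyal_mul \<theta> (P i k) (Q k j) m)"
    by (simp add: comp_def)
  also have "\<dots> = (\<Sum>k<n. moyal_mul \<theta> (P i k) (Q k j) m)"
    by (simp add: interv_sum_list_conv_sum_set_nat atLeast0LessThan)
  finally show ?thesis using True by simp
next
  case False
  then show ?thesis unfolding mmul_def if_not_P[OF False] by (simp add: A_theta_def)
qed

lemma mstar_A: "mstar (A_theta \<theta>) n P i j = (if i < n \<and> j < n then moyal_star \<theta> (P j i) else (\<lambda>_. 0))"
  by (simp add: mstar_def A_theta_def)

lemma mid_A: "mid (A_theta \<theta>) n i j = (if i = j \<and> i < n then scalar_incl 1 else (\<lambda>_. 0))"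
  by (simp add: mid_def A_theta_def scalar_incl_def)

lemma mat_in_A: "mat_in (A_theta \<theta>) n P \<longleftrightarrow>
   (\<forall>i j. i < n \<and> j < n \<longrightarrow> finite (supp2 (P i j))) \<and> (\<forall>i j. \<not> (i < n \<and> j < n) \<longrightarrow> P i j = (\<lambda>_. 0))"
  by (simp add: mat_in_def A_theta_def)

lemma finite_le2: "finite {m. le2 M m}"
proof -
  have "{m. le2 M m} \<subseteq> {..fst M + snd M} \<times> {..fst M + snd M}"
    by (auto simp: le2_def)
  then show ?thesis by (rule finite_subset) auto
qed

lemma key:
  fixes F :: "nat \<Rightarrow> nat \<Rightarrow> (nat \<times> nat \<Rightarrow> complex)"
  assumes fin: "\<And>i k. i < n \<Longrightarrow> k < n \<Longrightarrow> finite (supp2 (F i k))"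
    and H: "\<And>M i. M \<noteq> (0, 0) \<Longrightarrow> (\<forall>i<n. \<forall>k<n. \<forall>m\<in>supp2 (F i k). le2 M m) \<Longrightarrow> i < n \<Longrightarrow>
         (\<Sum>k<n. moyal_mul \<theta> (F i k) (moyal_star \<theta> (F i k)) (2 * fst M, 2 * snd M)) = 0"
    and i: "i < n" and k: "k < n"
  shows "supp2 (F i k) \<subseteq> {(0, 0)}"
proof (rule ccontr)
  assume "\<not> supp2 (F i k) \<subseteq> {(0, 0)}"
  then obtain m0 where m0: "m0 \<in> supp2 (F i k)" "m0 \<noteq> (0, 0)" by auto
  define S where "S = (\<Union>i\<in>{..<n}. \<Union>k\<in>{..<n}. supp2 (F i k))"
  have finS: "finite S" unfolding S_def using fin by auto
  have m0S: "m0 \<in> S" unfolding S_def using m0 i k by auto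
  define deg where "deg = (\<lambda>m::nat \<times> nat. fst m + snd m)"
  define d where "d = Max (deg ` S)"
  define D where "D = {m \<in> S. deg m = d}"
  have dS: "d \<in> deg ` S" unfolding d_def using finS m0S by (intro Max_in) auto
  have degle: "\<And>m. m \<in> S \<Longrightarrow> deg m \<le> d" unfolding d_def using finS by auto
  have finD: "finite D" "D \<noteq> {}" using finS dS by (auto simp: D_def)
  define a where "a = Max (fst ` D)"
  have "a \<in> fst ` D" unfolding a_def using finD by (intro Max_in) auto
  then obtain M where MD: "M \<in> D" and Ma: "fst M = a" by auto
  have ale: "\<And>m. m \<in> D \<Longrightarrow> fst m \<le> a" unfolding a_def using finD by auto
  have MS: "M \<in> S" and degM: "deg M = d" using MD by (auto simp: D_def)
  have bound: "\<forall>m\<in>S. le2 M m"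
  proof
    fix m assume mS: "m \<in> S"
    show "le2 M m"
    proof (cases "deg m = d")
      case True
      then have "m \<in> D" using mS by (simp add: D_def)
      then show ?thesis using ale[of m] Ma degM True by (simp add: le2_def deg_def)
    next
      case False
      then show ?thesis using degle[OF mS] degM by (simp add: le2_def deg_def)
    qed
  qed
  have M0: "M \<noteq> (0, 0)"
  proof
    assume "M = (0, 0)"
    then have "d = 0" using degM by (simp add: deg_def)
    moreover have "deg m0 > 0" using m0(2) by (cases m0) (auto simp: deg_def)
    ultimately show False using degle[OF m0S] by simp
  qed
  obtain i1 k1 where i1: "i1 < n" and k1: "k1 < n" and M1: "M \<in> supp2 (F i1 k1)"
    using MS unfolding S_def by auto
  have bnd: "\<forall>i<n. \<forall>k<n. \<forall>m\<in>supp2 (F i k). le2 M m"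
    using bound unfolding S_def by auto
  have H1: "(\<Sum>k<n. moyal_mul \<theta> (F i1 k) (moyal_star \<theta> (F i1 k)) (2 * fst M, 2 * snd M)) = 0"
    by (rule H[OF M0 bnd i1])
  have trm: "moyal_mul \<theta> (F i1 k) (moyal_star \<theta> (F i1 k)) (2 * fst M, 2 * snd M)
      = complex_of_real ((cmod (F i1 k M))\<^sup>2)" if kn: "k < n" for k
  proof -
    have b1: "\<forall>m\<in>supp2 (F i1 k). le2 M m" using bnd i1 kn by auto
    have b2: "\<forall>m\<in>supp2 (moyal_star \<theta> (F i1 k)). le2 M m" by (rule bound_star[OF b1])
    have f2: "finite (supp2 (moyal_star \<theta> (F i1 k)))"
      using b2 finite_le2[of M] by (rule_tac finite_subset[of _ "{m. le2 M m}"]) auto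
    have "moyal_mul \<theta> (F i1 k) (moyal_star \<theta> (F i1 k)) (2 * fst M, 2 * snd M)
        = F i1 k M * moyal_star \<theta> (F i1 k) M"
      by (rule lead_mul[OF b1 b2 fin[OF i1 kn] f2])
    also have "moyal_star \<theta> (F i1 k) M = cnj (F i1 k M)"
      by (rule lead_star[OF b1 fin[OF i1 kn]])
    finally show ?thesis by (simp only: complex_norm_square)
  qed
  have "(\<Sum>k<n. moyal_mul \<theta> (F i1 k) (moyal_star \<theta> (F i1 k)) (2 * fst M, 2 * snd M))
      = (\<Sum>k<n. complex_of_real ((cmod (F i1 k M))\<^sup>2))"
    by (rule sum.cong) (auto simp only: trm lessThan_iff)
  also have "\<dots> = complex_of_real (\<Sum>k<n. (cmod (F i1 k M))\<^sup>2)"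
    by (rule of_real_sum[symmetric])
  moreover have "(\<Sum>k<n. (cmod (F i1 k M))\<^sup>2) > 0"
  proof -
    have "(cmod (F i1 k1 M))\<^sup>2 > 0" using M1 by (simp add: supp2_def)
    moreover have "(cmod (F i1 k1 M))\<^sup>2 \<le> (\<Sum>k<n. (cmod (F i1 k M))\<^sup>2)"
      by (rule member_le_sum) (use k1 in auto)
    ultimately show ?thesis by linarith
  qed
  ultimately show False using H1 by (metis of_real_eq_0_iff less_irrefl)
qed

lemma le2_double: "le2 M (2 * fst M, 2 * snd M) \<Longrightarrow> M = ((0::nat), (0::nat))"
  by (cases M) (auto simp: le2_def)

definition Lm :: "complex mat \<Rightarrow> (nat \<times> nat \<Rightarrow> complex) mat" where
  "Lm p = (\<lambda>i j. scalar_incl (p i j))"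

lemma const_of_supp: "supp2 f \<subseteq> {(0, 0)} \<Longrightarrow> f = scalar_incl (f (0, 0))"
  by (auto simp: supp2_def scalar_incl_def fun_eq_iff)

lemma proj_const:
  assumes P: "projector (A_theta \<theta>) (n, P)"
  shows "P = Lm (\<lambda>i j. P i j (0, 0))"
proof -
  have mi: "mat_in (A_theta \<theta>) n P" and PP: "mmul (A_theta \<theta>) n P P = P"
    and Ps: "mstar (A_theta \<theta>) n P = P" using P by (auto simp: projector_def)
  have fin: "\<And>i k. i < n \<Longrightarrow> k < n \<Longrightarrow> finite (supp2 (P i k))" using mi by (simp add: mat_in_A)
  have out: "\<And>i j. \<not> (i < n \<and> j < n) \<Longrightarrow> P i j = (\<lambda>_. 0)" using mi by (simp add: mat_in_A)
  have st: "P k i = moyal_star \<theta> (P i k)" if "i < n" "k < n" for i k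
  proof -
    have "P k i = mstar (A_theta \<theta>) n P k i" using Ps by simp
    then show ?thesis using that by (simp add: mstar_A)
  qed
  have sub: "supp2 (P i k) \<subseteq> {(0, 0)}" if "i < n" "k < n" for i k
  proof (rule key[of n P \<theta>, OF fin _ that])
    fix M :: "nat \<times> nat" and i assume M0: "M \<noteq> (0, 0)" and bnd: "\<forall>i<n. \<forall>k<n. \<forall>m\<in>supp2 (P i k). le2 M m" and i: "i < n"
    have "(\<Sum>k<n. moyal_mul \<theta> (P i k) (moyal_star \<theta> (P i k)) (2 * fst M, 2 * snd M))
        = (\<Sum>k<n. moyal_mul \<theta> (P i k) (P k i) (2 * fst M, 2 * snd M))"
      by (rule sum.cong) (use i in \<open>auto simp: st[symmetric]\<close>)
    also have "\<dots> = mmul (A_theta \<theta>) n P P i i (2 * fst M, 2 * snd M)" using i by (simp add: mmul_A)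
    also have "\<dots> = P i i (2 * fst M, 2 * snd M)" using PP by simp
    also have "\<dots> = 0"
    proof (rule ccontr)
      assume "P i i (2 * fst M, 2 * snd M) \<noteq> 0"
      then have "le2 M (2 * fst M, 2 * snd M)" using bnd i by (auto simp: supp2_def)
      then show False using le2_double M0 by blast
    qed
    finally show "(\<Sum>k<n. moyal_mul \<theta> (P i k) (moyal_star \<theta> (P i k)) (2 * fst M, 2 * snd M)) = 0" .
  qed
  show ?thesis
  proof (intro ext)
    fix i j m
    show "P i j m = Lm (\<lambda>i j. P i j (0, 0)) i j m"
    proof (cases "i < n \<and> j < n")
      case True
      then show ?thesis using const_of_supp[OF sub[of i j]] by (metis Lm_def)
    next
      case False
      then show ?thesis using out[OF False] by (simp add: Lm_def scalar_incl_def)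
    qed
  qed
qed

lemma unitary_const:
  assumes U: "unitary (A_theta \<theta>) n U"
  shows "U = Lm (\<lambda>i j. U i j (0, 0))"
proof -
  have mi: "mat_in (A_theta \<theta>) n U" and UU: "mmul (A_theta \<theta>) n U (mstar (A_theta \<theta>) n U) = mid (A_theta \<theta>) n"
    using U by (auto simp: unitary_def)
  have fin: "\<And>i k. i < n \<Longrightarrow> k < n \<Longrightarrow> finite (supp2 (U i k))" using mi by (simp add: mat_in_A)
  have out: "\<And>i j. \<not> (i < n \<and> j < n) \<Longrightarrow> U i j = (\<lambda>_. 0)" using mi by (simp add: mat_in_A)
  have sub: "supp2 (U i k) \<subseteq> {(0, 0)}" if "i < n" "k < n" for i k
  proof (rule key[of n U \<theta>, OF fin _ that])
    fix M :: "nat \<times> nat" and i assume M0: "M \<noteq> (0, 0)" and i: "i < n"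
    have "(\<Sum>k<n. moyal_mul \<theta> (U i k) (moyal_star \<theta> (U i k)) (2 * fst M, 2 * snd M))
        = (\<Sum>k<n. moyal_mul \<theta> (U i k) (mstar (A_theta \<theta>) n U k i) (2 * fst M, 2 * snd M))"
      by (rule sum.cong) (use i in \<open>auto simp: mstar_A\<close>)
    also have "\<dots> = mmul (A_theta \<theta>) n U (mstar (A_theta \<theta>) n U) i i (2 * fst M, 2 * snd M)"
      using i by (simp add: mmul_A)
    also have "\<dots> = mid (A_theta \<theta>) n i i (2 * fst M, 2 * snd M)" using UU by simp
    also have "\<dots> = 0" using i M0 by (cases M) (auto simp: mid_A scalar_incl_def)
    finally show "(\<Sum>k<n. moyal_mul \<theta> (U i k) (moyal_star \<theta> (U i k)) (2 * fst M, 2 * snd M)) = 0" .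
  qed
  show ?thesis
  proof (intro ext)
    fix i j m
    show "U i j m = Lm (\<lambda>i j. U i j (0, 0)) i j m"
    proof (cases "i < n \<and> j < n")
      case True
      then show ?thesis using const_of_supp[OF sub[of i j]] by (metis Lm_def)
    next
      case False
      then show ?thesis using out[OF False] by (simp add: Lm_def scalar_incl_def)
    qed
  qed
qed


lemma supp2_scalar: "supp2 (scalar_incl a) = (if a = 0 then {} else {(0, 0)})"
  by (auto simp: supp2_def scalar_incl_def split: if_splits)

lemma scalar_inj: "scalar_incl a = scalar_incl b \<Longrightarrow> a = b"
  by (metis scalar_incl_def)

lemma scalar_zero: "scalar_incl 0 = (\<lambda>_. 0)"
  by (simp add: scalar_incl_def fun_eq_iff)

lemma mm_scalar: "moyal_mul \<theta> (scalar_incl a) (scalar_incl b) = scalar_incl (a * b)"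
  unfolding moyal_mul_def supp2_scalar
  by (auto simp: scalar_incl_def fun_eq_iff)

lemma ms_scalar: "moyal_star \<theta> (scalar_incl a) = scalar_incl (cnj a)"
  unfolding moyal_star_def supp2_scalar
  by (auto simp: scalar_incl_def fun_eq_iff)

lemma sum_scalar: "(\<Sum>k<n. scalar_incl (f k) m) = scalar_incl (\<Sum>k<n. f k) m"
  by (cases "m = (0, 0)") (simp_all add: scalar_incl_def)

lemma mmul_Lm: "mmul (A_theta \<theta>) n (Lm p) (Lm q) = Lm (cm n p q)"
proof (intro ext)
  fix i j m
  show "mmul (A_theta \<theta>) n (Lm p) (Lm q) i j m = Lm (cm n p q) i j m"
    by (simp add: mmul_A Lm_def mm_scalar sum_scalar cm_def) (simp add: scalar_incl_def)
qed

lemma mstar_Lm: "mstar (A_theta \<theta>) n (Lm p) = Lm (cst n p)"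
  by (auto simp: mstar_A Lm_def ms_scalar cst_def scalar_zero intro!: ext)

lemma mid_Lm: "mid (A_theta \<theta>) n = Lm (cid n)"
  by (auto simp: mid_A Lm_def cid_def scalar_zero intro!: ext)

lemma mat_in_Lm: "mat_in (A_theta \<theta>) n (Lm p) \<longleftrightarrow> zo n p"
proof -
  have "Lm p i j = (\<lambda>_. 0) \<longleftrightarrow> p i j = 0" for i j
    using scalar_inj[of "p i j" 0] by (auto simp: Lm_def scalar_zero[symmetric])
  then show ?thesis by (auto simp: mat_in_A zo_def supp2_scalar Lm_def)
qed

lemma Lm_inj: "Lm p = Lm q \<Longrightarrow> p = q"
  by (intro ext) (metis Lm_def scalar_inj)

lemma unitary_Lm: "unitary (A_theta \<theta>) n (Lm u) \<longleftrightarrow> cun n u"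
proof -
  have "mmul (A_theta \<theta>) n (Lm u) (mstar (A_theta \<theta>) n (Lm u)) = mid (A_theta \<theta>) n \<longleftrightarrow>
        cm n u (cst n u) = cid n"
    by (simp add: mstar_Lm mmul_Lm mid_Lm) (metis Lm_inj)
  moreover have "mmul (A_theta \<theta>) n (mstar (A_theta \<theta>) n (Lm u)) (Lm u) = mid (A_theta \<theta>) n \<longleftrightarrow>
        cm n (cst n u) u = cid n"
    by (simp add: mstar_Lm mmul_Lm mid_Lm) (metis Lm_inj)
  ultimately show ?thesis by (simp add: unitary_def cun_def mat_in_Lm)
qed

lemma projector_Lm: "projector (A_theta \<theta>) (n, Lm p) \<longleftrightarrow> cproj n p"
proof -
  have "mmul (A_theta \<theta>) n (Lm p) (Lm p) = Lm p \<longleftrightarrow> cm n p p = p"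
    by (simp add: mmul_Lm) (metis Lm_inj)
  moreover have "mstar (A_theta \<theta>) n (Lm p) = Lm p \<longleftrightarrow> cst n p = p"
    by (simp add: mstar_Lm) (metis Lm_inj)
  ultimately show ?thesis by (simp add: projector_def cproj_def mat_in_Lm)
qed

lemma dsum_Lm: "dsum (A_theta \<theta>) (n, Lm p) (m, Lm q) = (n + m, Lm (dm n m p q))"
  by (auto simp: dsum_def dm_def Lm_def A_theta_def scalar_zero intro!: ext)

definition LP :: "nat \<times> complex mat \<Rightarrow> nat \<times> (nat \<times> nat \<Rightarrow> complex) mat" where
  "LP P = (fst P, Lm (snd P))"
definition UP :: "nat \<times> (nat \<times> nat \<Rightarrow> complex) mat \<Rightarrow> nat \<times> complex mat" where
  "UP P = (fst P, \<lambda>i j. snd P i j (0, 0))"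

lemma UP_LP[simp]: "UP (LP Q) = Q"
  by (simp add: UP_def LP_def Lm_def scalar_incl_def)

lemma projector_LP: "projector (A_theta \<theta>) (LP Q) \<longleftrightarrow> projector complex_salg Q"
  by (cases Q) (simp add: LP_def projector_Lm projector_C)

lemma projector_A_LP: "projector (A_theta \<theta>) P \<Longrightarrow> P = LP (UP P)"
proof -
  assume h: "projector (A_theta \<theta>) P"
  obtain n p where P: "P = (n, p)" by (cases P)
  have "p = Lm (\<lambda>i j. p i j (0, 0))" using proj_const h P by blast
  then show "P = LP (UP P)" using P by (simp add: LP_def UP_def)
qed

lemma dsum_LP: "dsum (A_theta \<theta>) (LP X) (LP Y) = LP (dsum complex_salg X Y)"
  by (cases X, cases Y) (simp add: LP_def dsum_Lm dsum_C)

lemma zero_proj_A: "zero_proj (A_theta \<theta>) = LP (zero_proj complex_salg)"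
  by (simp add: zero_proj_def LP_def Lm_def A_theta_def complex_salg_def scalar_zero)

lemma proj_equiv_LP: "proj_equiv (A_theta \<theta>) (LP X) (LP Y) \<longleftrightarrow> proj_equiv complex_salg X Y"
proof -
  obtain n p where X: "X = (n, p)" by (cases X)
  obtain m q where Y: "Y = (m, q)" by (cases Y)
  have "(\<exists>N u. n \<le> N \<and> m \<le> N \<and> unitary (A_theta \<theta>) N u \<and>
          Lm p = mmul (A_theta \<theta>) N (mmul (A_theta \<theta>) N u (Lm q)) (mstar (A_theta \<theta>) N u))
     \<longleftrightarrow> (\<exists>N u. n \<le> N \<and> m \<le> N \<and> unitary complex_salg N u \<and>
          p = mmul complex_salg N (mmul complex_salg N u q) (mstar complex_salg N u))"
  proof
    assume "\<exists>N u. n \<le> N \<and> m \<le> N \<and> unitary (A_theta \<theta>) N u \<and>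
          Lm p = mmul (A_theta \<theta>) N (mmul (A_theta \<theta>) N u (Lm q)) (mstar (A_theta \<theta>) N u)"
    then obtain N u where N: "n \<le> N" "m \<le> N" and u: "unitary (A_theta \<theta>) N u"
      and e: "Lm p = mmul (A_theta \<theta>) N (mmul (A_theta \<theta>) N u (Lm q)) (mstar (A_theta \<theta>) N u)" by blast
    define u' where "u' = (\<lambda>i j. u i j (0, 0))"
    have uu: "u = Lm u'" using unitary_const[OF u] by (simp add: u'_def)
    have "cun N u'" using u uu unitary_Lm by metis
    moreover have "Lm p = Lm (cm N (cm N u' q) (cst N u'))"
      using e uu by (simp add: mmul_Lm mstar_Lm)
    then have "p = cm N (cm N u' q) (cst N u')" by (rule Lm_inj)
    ultimately show "\<exists>N u. n \<le> N \<and> m \<le> N \<and> unitary complex_salg N u \<and>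
          p = mmul complex_salg N (mmul complex_salg N u q) (mstar complex_salg N u)"
      using N by (auto simp: unitary_C mmul_C mstar_C)
  next
    assume "\<exists>N u. n \<le> N \<and> m \<le> N \<and> unitary complex_salg N u \<and>
          p = mmul complex_salg N (mmul complex_salg N u q) (mstar complex_salg N u)"
    then obtain N u where N: "n \<le> N" "m \<le> N" and u: "cun N u"
      and e: "p = cm N (cm N u q) (cst N u)" by (auto simp: unitary_C mmul_C mstar_C)
    have "unitary (A_theta \<theta>) N (Lm u)" using u by (simp add: unitary_Lm)
    moreover have "Lm p = mmul (A_theta \<theta>) N (mmul (A_theta \<theta>) N (Lm u) (Lm q)) (mstar (A_theta \<theta>) N (Lm u))"
      using e by (simp add: mmul_Lm mstar_Lm)
    ultimately show "\<exists>N u. n \<le> N \<and> m \<le> N \<and> unitary (A_theta \<theta>) N u \<and>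
          Lm p = mmul (A_theta \<theta>) N (mmul (A_theta \<theta>) N u (Lm q)) (mstar (A_theta \<theta>) N u)"
      using N by blast
  qed
  then show ?thesis
    unfolding proj_equiv_def X Y LP_def fst_conv snd_conv
    using projector_Lm[of \<theta> n p] projector_Lm[of \<theta> m q] projector_C[of n p] projector_C[of m q]
    by simp
qed


definition vC :: "(nat \<times> complex mat) \<times> (nat \<times> complex mat) \<Rightarrow> int" where
  "vC x = int (rk (fst x)) - int (rk (snd x))"

definition vA :: "(nat \<times> (nat \<times> nat \<Rightarrow> complex) mat) \<times> (nat \<times> (nat \<times> nat \<Rightarrow> complex) mat) \<Rightarrow> int" where
  "vA y = vC (UP (fst y), UP (snd y))"

lemma PPs_iff: "x \<in> PPs A \<longleftrightarrow> projector A (fst x) \<and> projector A (snd x)"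
  by (simp add: PPs_def)

lemma kgen_C: "kgen complex_salg vC"
proof
  fix x y :: "(nat \<times> complex mat) \<times> (nat \<times> complex mat)"
  obtain a b where x: "x = (a, b)" by (cases x)
  obtain c d where y: "y = (c, d)" by (cases y)
  show "(x, y) \<in> grel complex_salg \<longleftrightarrow> x \<in> PPs complex_salg \<and> y \<in> PPs complex_salg \<and> vC x = vC y"
    unfolding x y grel_C PPs_iff vC_def fst_conv snd_conv by linarith
next
  fix x y :: "(nat \<times> complex mat) \<times> (nat \<times> complex mat)"
  assume "x \<in> PPs complex_salg" "y \<in> PPs complex_salg"
  then show "(dsum complex_salg (fst x) (fst y), dsum complex_salg (snd x) (snd y)) \<in> PPs complex_salg \<and>
        vC (dsum complex_salg (fst x) (fst y), dsum complex_salg (snd x) (snd y)) = vC x + vC y"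
    by (simp add: PPs_iff vC_def projector_dsum_C)
next
  show "(zero_proj complex_salg, zero_proj complex_salg) \<in> PPs complex_salg"
    by (simp add: PPs_iff zero_proj_C projector_C cproj_zero)
  show "vC (zero_proj complex_salg, zero_proj complex_salg) = 0"
    by (simp add: vC_def)
next
  fix k :: int
  show "\<exists>x\<in>PPs complex_salg. vC x = k"
  proof (cases "k \<ge> 0")
    case True
    let ?x = "((nat k, std (nat k) (nat k)), zero_proj complex_salg)"
    have "?x \<in> PPs complex_salg"
      by (simp add: PPs_iff zero_proj_C projector_C cproj_zero cproj_std)
    moreover have "vC ?x = k" using True by (simp add: vC_def rk_std zero_proj_C rk_zero)
    ultimately show ?thesis by blast
  next
    case False
    let ?x = "(zero_proj complex_salg, (nat (- k), std (nat (- k)) (nat (- k))))"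
    have "?x \<in> PPs complex_salg"
      by (simp add: PPs_iff zero_proj_C projector_C cproj_zero cproj_std)
    moreover have "vC ?x = k" using False by (simp add: vC_def rk_std zero_proj_C rk_zero)
    ultimately show ?thesis by blast
  qed
qed

lemma grel_A_LP:
  assumes "projector complex_salg a" "projector complex_salg b" "projector complex_salg c" "projector complex_salg d"
  shows "((LP a, LP b), (LP c, LP d)) \<in> grel (A_theta \<theta>) \<longleftrightarrow> ((a, b), (c, d)) \<in> grel complex_salg"
proof -
  have "(\<exists>e. projector (A_theta \<theta>) e \<and> proj_equiv (A_theta \<theta>)
            (dsum (A_theta \<theta>) (dsum (A_theta \<theta>) (LP a) (LP d)) e) (dsum (A_theta \<theta>) (dsum (A_theta \<theta>) (LP c) (LP b)) e))
     \<longleftrightarrow> (\<exists>e. projector complex_salg e \<and> proj_equiv complex_salg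
            (dsum complex_salg (dsum complex_salg a d) e) (dsum complex_salg (dsum complex_salg c b) e))"
  proof
    assume "\<exists>e. projector (A_theta \<theta>) e \<and> proj_equiv (A_theta \<theta>)
            (dsum (A_theta \<theta>) (dsum (A_theta \<theta>) (LP a) (LP d)) e) (dsum (A_theta \<theta>) (dsum (A_theta \<theta>) (LP c) (LP b)) e)"
    then obtain e where e: "projector (A_theta \<theta>) e" and eq: "proj_equiv (A_theta \<theta>)
            (dsum (A_theta \<theta>) (dsum (A_theta \<theta>) (LP a) (LP d)) e) (dsum (A_theta \<theta>) (dsum (A_theta \<theta>) (LP c) (LP b)) e)"
      by blast
    have eL: "e = LP (UP e)" by (rule projector_A_LP[OF e])
    have "projector complex_salg (UP e)" using e eL projector_LP by metis
    moreover have "proj_equiv complex_salg (dsum complex_salg (dsum complex_salg a d) (UP e))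
        (dsum complex_salg (dsum complex_salg c b) (UP e))"
      using eq eL by (metis dsum_LP proj_equiv_LP)
    ultimately show "\<exists>e. projector complex_salg e \<and> proj_equiv complex_salg
            (dsum complex_salg (dsum complex_salg a d) e) (dsum complex_salg (dsum complex_salg c b) e)" by blast
  next
    assume "\<exists>e. projector complex_salg e \<and> proj_equiv complex_salg
            (dsum complex_salg (dsum complex_salg a d) e) (dsum complex_salg (dsum complex_salg c b) e)"
    then obtain e where e: "projector complex_salg e" and eq: "proj_equiv complex_salg
            (dsum complex_salg (dsum complex_salg a d) e) (dsum complex_salg (dsum complex_salg c b) e)"
      by blast
    have "projector (A_theta \<theta>) (LP e)" using e projector_LP by metis
    moreover have "proj_equiv (A_theta \<theta>)
            (dsum (A_theta \<theta>) (dsum (A_theta \<theta>) (LP a) (LP d)) (LP e)) (dsum (A_theta \<theta>) (dsum (A_theta \<theta>) (LP c) (LP b)) (LP e))"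
      using eq by (metis dsum_LP proj_equiv_LP)
    ultimately show "\<exists>e. projector (A_theta \<theta>) e \<and> proj_equiv (A_theta \<theta>)
            (dsum (A_theta \<theta>) (dsum (A_theta \<theta>) (LP a) (LP d)) e) (dsum (A_theta \<theta>) (dsum (A_theta \<theta>) (LP c) (LP b)) e)"
      by blast
  qed
  then show ?thesis
    unfolding grel_def mem_Collect_eq case_prod_conv
    using assms projector_LP by metis
qed

lemma kgen_A: "kgen (A_theta \<theta>) vA"
proof
  fix x y :: "(nat \<times> (nat \<times> nat \<Rightarrow> complex) mat) \<times> (nat \<times> (nat \<times> nat \<Rightarrow> complex) mat)"
  obtain a b where x: "x = (a, b)" by (cases x)
  obtain c d where y: "y = (c, d)" by (cases y)
  show "(x, y) \<in> grel (A_theta \<theta>) \<longleftrightarrow> x \<in> PPs (A_theta \<theta>) \<and> y \<in> PPs (A_theta \<theta>) \<and> vA x = vA y"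
  proof (cases "x \<in> PPs (A_theta \<theta>) \<and> y \<in> PPs (A_theta \<theta>)")
    case False
    then show ?thesis unfolding x y grel_def PPs_iff by auto
  next
    case True
    then have pr: "projector (A_theta \<theta>) a" "projector (A_theta \<theta>) b" "projector (A_theta \<theta>) c" "projector (A_theta \<theta>) d"
      using x y by (auto simp: PPs_iff)
    have L: "a = LP (UP a)" "b = LP (UP b)" "c = LP (UP c)" "d = LP (UP d)"
      using pr projector_A_LP by blast+
    have prC: "projector complex_salg (UP a)" "projector complex_salg (UP b)"
      "projector complex_salg (UP c)" "projector complex_salg (UP d)"
      using pr L projector_LP by metis+
    have "(x, y) \<in> grel (A_theta \<theta>) \<longleftrightarrow> (((UP a), (UP b)), ((UP c), (UP d))) \<in> grel complex_salg"
      using grel_A_LP[OF prC, of \<theta>] L x y by metis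
    also have "\<dots> \<longleftrightarrow> vC (UP a, UP b) = vC (UP c, UP d)"
      using kgen.g1[OF kgen_C] prC by (simp add: PPs_iff)
    finally show ?thesis using True x y by (simp add: vA_def)
  qed
next
  fix x y :: "(nat \<times> (nat \<times> nat \<Rightarrow> complex) mat) \<times> (nat \<times> (nat \<times> nat \<Rightarrow> complex) mat)"
  assume x: "x \<in> PPs (A_theta \<theta>)" and y: "y \<in> PPs (A_theta \<theta>)"
  define x' where "x' = (UP (fst x), UP (snd x))"
  define y' where "y' = (UP (fst y), UP (snd y))"
  have Lx: "fst x = LP (fst x')" "snd x = LP (snd x')"
    using x projector_A_LP[of \<theta> "fst x"] projector_A_LP[of \<theta> "snd x"] by (auto simp: PPs_iff x'_def)
  have Ly: "fst y = LP (fst y')" "snd y = LP (snd y')"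
    using y projector_A_LP[of \<theta> "fst y"] projector_A_LP[of \<theta> "snd y"] by (auto simp: PPs_iff y'_def)
  have x'C: "x' \<in> PPs complex_salg" using x Lx projector_LP by (metis PPs_iff)
  have y'C: "y' \<in> PPs complex_salg" using y Ly projector_LP by (metis PPs_iff)
  note G = kgen.g2[OF kgen_C x'C y'C]
  show "(dsum (A_theta \<theta>) (fst x) (fst y), dsum (A_theta \<theta>) (snd x) (snd y)) \<in> PPs (A_theta \<theta>) \<and>
        vA (dsum (A_theta \<theta>) (fst x) (fst y), dsum (A_theta \<theta>) (snd x) (snd y)) = vA x + vA y"
    using G unfolding Lx Ly dsum_LP by (simp add: PPs_iff projector_LP vA_def x'_def y'_def)
next
  show "(zero_proj (A_theta \<theta>), zero_proj (A_theta \<theta>)) \<in> PPs (A_theta \<theta>)"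
    using kgen.g3(1)[OF kgen_C] by (simp add: PPs_iff zero_proj_A projector_LP)
  show "vA (zero_proj (A_theta \<theta>), zero_proj (A_theta \<theta>)) = 0"
    using kgen.g3(2)[OF kgen_C] by (simp add: vA_def zero_proj_A)
next
  fix k :: int
  obtain x where x: "x \<in> PPs complex_salg" "vC x = k" using kgen.g4[OF kgen_C] by blast
  have "(LP (fst x), LP (snd x)) \<in> PPs (A_theta \<theta>)" using x by (simp add: PPs_iff projector_LP)
  moreover have "vA (LP (fst x), LP (snd x)) = k" using x by (simp add: vA_def)
  ultimately show "\<exists>x\<in>PPs (A_theta \<theta>). vA x = k" by blast
qed

lemma K0_map_fib: "K0_map (A_theta \<theta>) scalar_incl (fib complex_salg vC k) = fib (A_theta \<theta>) vA k"
proof -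
  have e: "grel (A_theta \<theta>) `` {((fst (fst x), \<lambda>i j. scalar_incl (snd (fst x) i j)),
              (fst (snd x), \<lambda>i j. scalar_incl (snd (snd x) i j)))} = fib (A_theta \<theta>) vA k"
    if x: "x \<in> fib complex_salg vC k" for x
  proof -
    have xP: "x \<in> PPs complex_salg" "vC x = k" using x by (auto simp: fib_def)
    have eq: "((fst (fst x), \<lambda>i j. scalar_incl (snd (fst x) i j)),
              (fst (snd x), \<lambda>i j. scalar_incl (snd (snd x) i j))) = (LP (fst x), LP (snd x))"
      by (simp add: LP_def Lm_def)
    have "(LP (fst x), LP (snd x)) \<in> PPs (A_theta \<theta>)" using xP by (simp add: PPs_iff projector_LP)
    moreover have "vA (LP (fst x), LP (snd x)) = k" using xP by (simp add: vA_def)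
    ultimately show ?thesis unfolding eq using kgen.class_eq[OF kgen_A] by metis
  qed
  have "fib complex_salg vC k \<noteq> {}" by (rule kgen.F_ne[OF kgen_C])
  then show ?thesis unfolding K0_map_def using e by auto
qed

theorem main_result:
  shows "group (K0 (A_theta \<theta>))
    \<and> K0_map (A_theta \<theta>) scalar_incl \<in> iso (K0 complex_salg) (K0 (A_theta \<theta>))
    \<and> K0 complex_salg \<cong> integer_group"
proof (intro conjI)
  show "group (K0 (A_theta \<theta>))" by (rule kgen.group_K0[OF kgen_A])
  show "K0 complex_salg \<cong> integer_group" by (rule kgen.iso_Z[OF kgen_C])
  show "K0_map (A_theta \<theta>) scalar_incl \<in> iso (K0 complex_salg) (K0 (A_theta \<theta>))"
  proof (rule isoI)
    show "K0_map (A_theta \<theta>) scalar_incl \<in> hom (K0 complex_salg) (K0 (A_theta \<theta>))"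
    proof (rule homI)
      fix X assume "X \<in> carrier (K0 complex_salg)"
      then obtain k where "X = fib complex_salg vC k" by (auto simp: kgen.carrier_K0[OF kgen_C])
      then show "K0_map (A_theta \<theta>) scalar_incl X \<in> carrier (K0 (A_theta \<theta>))"
        by (simp add: K0_map_fib kgen.carrier_K0[OF kgen_A])
    next
      fix X Y assume "X \<in> carrier (K0 complex_salg)" "Y \<in> carrier (K0 complex_salg)"
      then obtain k l where "X = fib complex_salg vC k" "Y = fib complex_salg vC l"
        by (auto simp: kgen.carrier_K0[OF kgen_C])
      then show "K0_map (A_theta \<theta>) scalar_incl (X \<otimes>\<^bsub>K0 complex_salg\<^esub> Y) =
          K0_map (A_theta \<theta>) scalar_incl X \<otimes>\<^bsub>K0 (A_theta \<theta>)\<^esub> K0_map (A_theta \<theta>) scalar_incl Y"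
        by (simp add: K0_map_fib kgen.mult_K0[OF kgen_C] kgen.mult_K0[OF kgen_A])
    qed
    show "bij_betw (K0_map (A_theta \<theta>) scalar_incl) (carrier (K0 complex_salg)) (carrier (K0 (A_theta \<theta>)))"
      unfolding bij_betw_def inj_on_def kgen.carrier_K0[OF kgen_C] kgen.carrier_K0[OF kgen_A]
      by (auto simp: K0_map_fib dest: kgen.F_inj[OF kgen_A])
         (metis K0_map_fib rangeI image_eqI)
  qed
qed


theorem corollary2p4:
  fixes \<theta> :: real
  assumes "\<theta> \<ge> 0"
  shows "group (K0 (A_theta \<theta>))
    \<and> K0_map (A_theta \<theta>) scalar_incl \<in> iso (K0 complex_salg) (K0 (A_theta \<theta>))
    \<and> K0 complex_salg \<cong> integer_group"
  by (rule main_result)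

end
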